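(* Let $a_{4,0},a_{2,2},a_{0,4}\geqslant 0$ and $a_{2,0},a_{0,2}\in\mathbb{R}$ with $a_{4,0}+a_{2,2}>0$ and $a_{2,2}+a_{0,4}>0$, and let $W(x,y)=e^{-q(x,y)}$, where $q(x,y)=a_{4,0}x^4+a_{2,2}x^2y^2+a_{0,4}y^4+a_{2,0}x^2+a_{0,2}y^2$. Let $\{\mathbb{P}_n\}_{n\geqslant0}$ be an orthonormal polynomial system for $W$, with leading coefficient matrices $G_n$ and three term relation matrices $A_{n,1},A_{n,2}$ (see context). Then for every $n\geqslant 0$, \begin{align*} 4a_{4,0}A_{n,1}&\left[(A_{n+1,1}A_{n+1,1}^T)A_{n,1}^T+A_{n,1}^T(A_{n,1}A_{n,1}^T+A_{n-1,1}^TA_{n-1,1})\right]\\ &+2a_{2,2}A_{n,1}\left[(A_{n+1,2}A_{n+1,1}^T)A_{n,2}^T+A_{n,2}^T(A_{n,1}A_{n,2}^T+A_{n-1,1}^TA_{n-1,2})\right]\\ &+2a_{2,0}A_{n,1}A_{n,1}^T=G_nN_{n+1,1}G_n^{-1} \end{align*} and \begin{align*} 4a_{0,4}A_{n,2}&\left[(A_{n+1,2}A_{n+1,2}^T)A_{n,2}^T+A_{n,2}^T(A_{n,2}A_{n,2}^T+A_{n-1,2}^TA_{n-1,2})\right]\\ &+2a_{2,2}A_{n,2}\left[(A_{n+1,1}A_{n+1,2}^T)A_{n,1}^T+A_{n,1}^T(A_{n,2}A_{n,1}^T+A_{n-1,2}^TA_{n-1,1})\right]\\ &+2a_{0,2}A_{n,2}A_{n,2}^T=G_nN_{n+1,2}G_n^{-1}.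 \end{align*}
   Context: Inner product: $(f,g)=\iint_{\mathbb{R}^2} f(x,y)g(x,y)W(x,y)\,dx\,dy$; for vectors/matrices of polynomials it is applied entrywise. For $n\geqslant0$, $\mathbb{X}_n=(x^n,x^{n-1}y,\dots,xy^{n-1},y^n)^T$. An orthonormal polynomial system is a sequence $\{\mathbb{P}_n\}_{n\geqslant0}$ of column vectors $\mathbb{P}_n=(P_{n,0},\dots,P_{n,n})^T$ of real bivariate polynomials, each of total degree exactly $n$, linearly independent, with $(\mathbb{P}_n,\mathbb{P}_n^T)=I_{n+1}$ and $(\mathbb{P}_n,\mathbb{P}_m^T)=0$ for $m\neq n$. Write $\mathbb{P}_n=\sum_{k=0}^nG^n_k\mathbb{X}_k$ with constant $(n+1)\times(k+1)$ matrices $G^n_k$; $G_n:=G^n_n$ is invertible. The orthonormal system satisfies, for $n\geqslant0$ (with $\mathbb{P}_{-1}=0$ and $A_{-1,i}=0$), $x\mathbb{P}_n=A_{n,1}\mathbb{P}_{n+1}+A_{n-1,1}^T\mathbb{P}_{n-1}$ and $y\mathbb{P}_n=A_{n,2}\mathbb{P}_{n+1}+A_{n-1,2}^T\mathbb{P}_{n-1}$, where $A_{n,i}$ are $(n+1)\times(n+2)$ full rank matrices. $N_{n,1}=\mathrm{diag}(n,n-1,\dots,1)$ and $N_{n,2}=\mathrm{diag}(1,2,\dots,n)$ are $n\times n$ matrices (so $N_{n+1,i}$ is $(n+1)\times(n+1)$). *)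

theory Defs
  imports "HOL-Analysis.Analysis" "Jordan_Normal_Form.Gauss_Jordan_Elimination"
begin

definition qform :: "real \<Rightarrow> real \<Rightarrow> real \<Rightarrow> real \<Rightarrow> real \<Rightarrow> real \<Rightarrow> real \<Rightarrow> real" where
  "qform a40 a22 a04 a20 a02 x y =
     a40 * x^4 + a22 * x^2 * y^2 + a04 * y^4 + a20 * x^2 + a02 * y^2"

definition weight :: "real \<Rightarrow> real \<Rightarrow> real \<Rightarrow> real \<Rightarrow> real \<Rightarrow> real \<Rightarrow> real \<Rightarrow> real" where
  "weight a40 a22 a04 a20 a02 x y = exp (- qform a40 a22 a04 a20 a02 x y)"

definition ip :: "(real \<Rightarrow> real \<Rightarrow> real) \<Rightarrow> (real \<Rightarrow> real \<Rightarrow> real) \<Rightarrow> (real \<Rightarrow> real \<Rightarrow> real) \<Rightarrow> real" where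
  "ip W f g = integral\<^sup>L lborel (\<lambda>(x::real, y::real). f x y * g x y * W x y)"

text \<open>The polynomial system given by its coefficient matrices: P_n = sum_{k<=n} G n k X_k,
  where G n k is the (n+1) x (k+1) matrix and X_k = (x^k, x^(k-1) y, ..., y^k)^T.
  opoly G n i x y is the i-th component P_{n,i}(x,y).\<close>
definition opoly :: "(nat \<Rightarrow> nat \<Rightarrow> real mat) \<Rightarrow> nat \<Rightarrow> nat \<Rightarrow> real \<Rightarrow> real \<Rightarrow> real" where
  "opoly G n i x y = (\<Sum>k\<le>n. \<Sum>j\<le>k. G n k $$ (i, j) * x ^ (k - j) * y ^ j)"

definition orthonormal_system :: "(real \<Rightarrow> real \<Rightarrow> real) \<Rightarrow> (nat \<Rightarrow> nat \<Rightarrow> real mat) \<Rightarrow> bool" where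
  "orthonormal_system W G \<longleftrightarrow>
     (\<forall>n k. k \<le> n \<longrightarrow> G n k \<in> carrier_mat (n+1) (k+1)) \<and>
     (\<forall>n i. i \<le> n \<longrightarrow> (\<exists>j\<le>n. G n n $$ (i, j) \<noteq> 0)) \<and>
     (\<forall>n m i j. i \<le> n \<longrightarrow> j \<le> m \<longrightarrow>
        ip W (opoly G n i) (opoly G m j) = (if n = m \<and> i = j then 1 else 0))"

text \<open>A_{n-1} with the convention A_{-1} = 0 (a 0 x 1 zero matrix).\<close>
definition prevA :: "(nat \<Rightarrow> real mat) \<Rightarrow> nat \<Rightarrow> real mat" where
  "prevA A n = (if n = 0 then 0\<^sub>m 0 1 else A (n - 1))"

definition three_term :: "(nat \<Rightarrow> nat \<Rightarrow> real mat) \<Rightarrow> (real \<Rightarrow> real \<Rightarrow> real) \<Rightarrow> (nat \<Rightarrow> real mat) \<Rightarrow> bool" where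
  "three_term G z A \<longleftrightarrow>
     (\<forall>n. A n \<in> carrier_mat (n+1) (n+2)) \<and>
     (\<forall>n i x y. i \<le> n \<longrightarrow>
        z x y * opoly G n i x y =
          (\<Sum>j\<le>n+1. A n $$ (i, j) * opoly G (n+1) j x y) +
          (\<Sum>j<n. prevA A n $$ (j, i) * opoly G (n-1) j x y))"

definition N1 :: "nat \<Rightarrow> real mat" where
  "N1 n = mat n n (\<lambda>(i, j). if i = j then real (n - i) else 0)"

definition N2 :: "nat \<Rightarrow> real mat" where
  "N2 n = mat n n (\<lambda>(i, j). if i = j then real (i + 1) else 0)"

definition minv :: "real mat \<Rightarrow> real mat" where
  "minv M = the (mat_inverse M)"

end

theory Submission
  imports Defs "Jordan_Normal_Form.Determinant"
begin


lemma zero_limit_top: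
  fixes u :: "real \<Rightarrow> real"
  assumes iu: "integrable lborel u" and lim: "(u \<longlongrightarrow> L) at_top"
  shows "L = 0"
proof (rule ccontr)
  assume L: "L \<noteq> 0"
  have "\<forall>\<^sub>F x in at_top. dist (u x) L < \<bar>L\<bar>/2"
    using tendstoD[OF lim, of "\<bar>L\<bar>/2"] L by auto
  then obtain R where R: "\<And>x. x \<ge> R \<Longrightarrow> dist (u x) L < \<bar>L\<bar>/2"
    by (auto simp: eventually_at_top_linorder)
  have bnd: "\<And>x. x \<ge> R \<Longrightarrow> \<bar>L\<bar>/2 \<le> \<bar>u x\<bar>"
  proof -
    fix x assume "x \<ge> R" then have "\<bar>u x - L\<bar> < \<bar>L\<bar>/2" using R by (simp add: dist_real_def)
    then show "\<bar>L\<bar>/2 \<le> \<bar>u x\<bar>" by linarith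
  qed
  define I where "I = integral\<^sup>L lborel (\<lambda>x. \<bar>u x\<bar>)"
  define b where "b = R + 2 * (\<bar>I\<bar> + 1) / \<bar>L\<bar>"
  have bR: "R \<le> b" using L by (simp add: b_def)
  have "integral\<^sup>L lborel (\<lambda>x. indicator {R..b} x * (\<bar>L\<bar>/2)) \<le> I"
    unfolding I_def
  proof (rule integral_mono)
    show "integrable lborel (\<lambda>x. indicator {R..b} x * (\<bar>L\<bar>/2) :: real)"
      by (intro integrable_mult_left integrable_real_indicator) (auto simp: emeasure_lborel_Icc_eq)
    show "integrable lborel (\<lambda>x. \<bar>u x\<bar>)" using iu by auto
    fix x show "indicator {R..b} x * (\<bar>L\<bar>/2) \<le> \<bar>u x\<bar>"
      using bnd[of x] by (auto simp: indicator_def)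
  qed
  moreover have "integral\<^sup>L lborel (\<lambda>x. indicator {R..b} x * (\<bar>L\<bar>/2)) = (b - R) * (\<bar>L\<bar>/2)"
    using bR by simp
  moreover have "(b - R) * (\<bar>L\<bar>/2) = \<bar>I\<bar> + 1" using L by (simp add: b_def)
  ultimately show False by linarith
qed

lemma zero_limit_bot:
  fixes u :: "real \<Rightarrow> real"
  assumes iu: "integrable lborel u" and lim: "(u \<longlongrightarrow> L) at_bot"
  shows "L = 0"
proof (rule ccontr)
  assume L: "L \<noteq> 0"
  have "\<forall>\<^sub>F x in at_bot. dist (u x) L < \<bar>L\<bar>/2"
    using tendstoD[OF lim, of "\<bar>L\<bar>/2"] L by auto
  then obtain R where R: "\<And>x. x \<le> R \<Longrightarrow> dist (u x) L < \<bar>L\<bar>/2"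
    by (auto simp: eventually_at_bot_linorder)
  have bnd: "\<And>x. x \<le> R \<Longrightarrow> \<bar>L\<bar>/2 \<le> \<bar>u x\<bar>"
  proof -
    fix x assume "x \<le> R" then have "\<bar>u x - L\<bar> < \<bar>L\<bar>/2" using R by (simp add: dist_real_def)
    then show "\<bar>L\<bar>/2 \<le> \<bar>u x\<bar>" by linarith
  qed
  define I where "I = integral\<^sup>L lborel (\<lambda>x. \<bar>u x\<bar>)"
  define b where "b = R - 2 * (\<bar>I\<bar> + 1) / \<bar>L\<bar>"
  have bR: "b \<le> R" using L by (simp add: b_def)
  have "integral\<^sup>L lborel (\<lambda>x. indicator {b..R} x * (\<bar>L\<bar>/2)) \<le> I"
    unfolding I_def
  proof (rule integral_mono)
    show "integrable lborel (\<lambda>x. indicator {b..R} x * (\<bar>L\<bar>/2) :: real)"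
      by (intro integrable_mult_left integrable_real_indicator) (auto simp: emeasure_lborel_Icc_eq)
    show "integrable lborel (\<lambda>x. \<bar>u x\<bar>)" using iu by auto
    fix x show "indicator {b..R} x * (\<bar>L\<bar>/2) \<le> \<bar>u x\<bar>"
      using bnd[of x] by (auto simp: indicator_def)
  qed
  moreover have "integral\<^sup>L lborel (\<lambda>x. indicator {b..R} x * (\<bar>L\<bar>/2)) = (R - b) * (\<bar>L\<bar>/2)"
    using bR by simp
  moreover have "(R - b) * (\<bar>L\<bar>/2) = \<bar>I\<bar> + 1" using L by (simp add: b_def)
  ultimately show False by linarith
qed

lemma ibp1d:
  fixes u u' :: "real \<Rightarrow> real"
  assumes deriv: "\<And>x. (u has_real_derivative u' x) (at x)"
    and cont: "continuous_on UNIV u'"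
    and iu: "integrable lborel u" and iu': "integrable lborel u'"
  shows "integral\<^sup>L lborel u' = 0"
proof -
  have ftc: "set_lebesgue_integral lborel {a..b} u' = u b - u a" if "a \<le> b" for a b
    unfolding set_lebesgue_integral_def
  proof (rule integral_FTC_atLeastAtMost[OF that])
    fix x show "(u has_vector_derivative u' x) (at x within {a..b})"
      using deriv[of x] by (auto simp: has_real_derivative_iff_has_vector_derivative intro: has_vector_derivative_at_within)
    show "continuous_on {a..b} u'" using cont by (rule continuous_on_subset) auto
  qed
  have si1: "set_integrable lborel {0..} u'"
    unfolding set_integrable_def using iu' by (intro integrable_mult_indicator) auto
  have si2: "set_integrable lborel {..0} u'"
    unfolding set_integrable_def using iu' by (intro integrable_mult_indicator) auto
  have t1: "((\<lambda>b. set_lebesgue_integral lborel {0..b} u') \<longlongrightarrow> set_lebesgue_integral lborel {0..} u') at_top"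
    by (rule tendsto_set_lebesgue_integral_at_top[OF _ si1]) auto
  have t2: "((\<lambda>a. set_lebesgue_integral lborel {a..0} u') \<longlongrightarrow> set_lebesgue_integral lborel {..0} u') at_bot"
    by (rule tendsto_set_lebesgue_integral_at_bot[OF _ si2]) auto
  define Sp where "Sp = set_lebesgue_integral lborel {0..} u'"
  define Sm where "Sm = set_lebesgue_integral lborel {..0} u'"
  have ev1: "\<forall>\<^sub>F b in at_top. set_lebesgue_integral lborel {0..b} u' = u b - u 0"
    using eventually_ge_at_top[of "0::real"] by eventually_elim (simp add: ftc)
  have "((\<lambda>b. u b - u 0) \<longlongrightarrow> Sp) at_top" unfolding Sp_def
    by (rule Lim_transform_eventually[OF t1 ev1])
  then have "((\<lambda>b. (u b - u 0) + u 0) \<longlongrightarrow> Sp + u 0) at_top"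
    by (intro tendsto_add) auto
  then have "(u \<longlongrightarrow> Sp + u 0) at_top" by simp
  from zero_limit_top[OF iu this] have p: "Sp = - u 0" by simp
  have ev2: "\<forall>\<^sub>F a in at_bot. set_lebesgue_integral lborel {a..0} u' = u 0 - u a"
    using eventually_le_at_bot[of "0::real"] by eventually_elim (simp add: ftc)
  have "((\<lambda>a. u 0 - u a) \<longlongrightarrow> Sm) at_bot" unfolding Sm_def
    by (rule Lim_transform_eventually[OF t2 ev2])
  then have "((\<lambda>a. u 0 - (u 0 - u a)) \<longlongrightarrow> u 0 - Sm) at_bot"
    by (intro tendsto_diff) auto
  then have "(u \<longlongrightarrow> u 0 - Sm) at_bot" by simp
  from zero_limit_bot[OF iu this] have m: "Sm = u 0" by simp
  have "integral\<^sup>L lborel u' = integral\<^sup>L lborel (\<lambda>x. indicator {0..} x * u' x + indicator {..0} x * u' x)"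
  proof (rule integral_cong_AE)
    show "AE x in lborel. u' x = indicator {0..} x * u' x + indicator {..0} x * u' x"
      using AE_lborel_singleton[of 0] by eventually_elim (auto simp: indicator_def)
  qed (use iu' si1 si2 in \<open>auto simp: set_integrable_def\<close>)
  also have "\<dots> = Sp + Sm" unfolding Sp_def Sm_def set_lebesgue_integral_def
    using si1 si2 unfolding set_integrable_def by (simp add: integral_add)
  finally show ?thesis using p m by simp
qed


lemma ibp2d:
  fixes h dh :: "real \<Rightarrow> real \<Rightarrow> real"
  assumes der: "\<And>x y. ((\<lambda>x. h x y) has_real_derivative dh x y) (at x)"
    and cont: "\<And>y. continuous_on UNIV (\<lambda>x. dh x y)"
    and ih: "integrable lborel (\<lambda>(x,y). h x y)" and idh: "integrable lborel (\<lambda>(x,y). dh x y)"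
  shows "integral\<^sup>L lborel (\<lambda>(x::real,y::real). dh x y) = 0"
proof -
  have ih': "integrable (lborel \<Otimes>\<^sub>M lborel) (\<lambda>(x,y). h x y)" using ih by (simp add: lborel_prod)
  have idh': "integrable (lborel \<Otimes>\<^sub>M lborel) (\<lambda>(x,y). dh x y)" using idh by (simp add: lborel_prod)
  have "AE y in lborel. integrable lborel (\<lambda>x. h x y)"
    by (rule lborel_pair.AE_integrable_snd[OF ih'])
  moreover have "AE y in lborel. integrable lborel (\<lambda>x. dh x y)"
    by (rule lborel_pair.AE_integrable_snd[OF idh'])
  ultimately have AE0: "AE y in lborel. integral\<^sup>L lborel (\<lambda>x. dh x y) = 0"
    by eventually_elim (rule ibp1d[OF der cont])
  have mi: "(\<lambda>y. \<integral>x. dh x y \<partial>lborel) \<in> borel_measurable lborel"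
    using lborel_pair.integrable_snd[OF idh'] by (rule borel_measurable_integrable)
  have "(\<integral>y. (\<integral>x. dh x y \<partial>lborel) \<partial>lborel) = 0"
    using AE0 by (rule integral_eq_zero_AE)
  then have "integral\<^sup>L (lborel \<Otimes>\<^sub>M lborel) (\<lambda>(x,y). dh x y) = 0"
    using lborel_pair.integral_snd[OF idh'] by simp
  then show ?thesis by (simp add: lborel_prod)
qed


lemma ibp2d_y:
  fixes h dh :: "real \<Rightarrow> real \<Rightarrow> real"
  assumes der: "\<And>x y. ((\<lambda>y. h x y) has_real_derivative dh x y) (at y)"
    and cont: "\<And>x. continuous_on UNIV (\<lambda>y. dh x y)"
    and ih: "integrable lborel (\<lambda>(x,y). h x y)" and idh: "integrable lborel (\<lambda>(x,y). dh x y)"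
  shows "integral\<^sup>L lborel (\<lambda>(x::real,y::real). dh x y) = 0"
proof -
  have ih': "integrable (lborel \<Otimes>\<^sub>M lborel) (\<lambda>(x,y). h x y)" using ih by (simp add: lborel_prod)
  have idh': "integrable (lborel \<Otimes>\<^sub>M lborel) (\<lambda>(x,y). dh x y)" using idh by (simp add: lborel_prod)
  have "AE x in lborel. integrable lborel (\<lambda>y. h x y)"
    by (rule lborel_pair.AE_integrable_fst[OF ih'])
  moreover have "AE x in lborel. integrable lborel (\<lambda>y. dh x y)"
    by (rule lborel_pair.AE_integrable_fst[OF idh'])
  ultimately have AE0: "AE x in lborel. integral\<^sup>L lborel (\<lambda>y. dh x y) = 0"
    by eventually_elim (rule ibp1d[OF der cont])
  have "(\<integral>x. (\<integral>y. dh x y \<partial>lborel) \<partial>lborel) = 0"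
    using AE0 by (rule integral_eq_zero_AE)
  then have "integral\<^sup>L (lborel \<Otimes>\<^sub>M lborel) (\<lambda>(x,y). dh x y) = 0"
    using lborel_pair.integral_fst[OF idh'] by simp
  then show ?thesis by (simp add: lborel_prod)
qed


definition idx :: "nat \<Rightarrow> (nat \<times> nat) set" where
  "idx n = (SIGMA k:{..<n}. {..k})"

lemma finite_idx[simp]: "finite (idx n)" unfolding idx_def by auto

definition spanlt :: "(nat \<Rightarrow> nat \<Rightarrow> real mat) \<Rightarrow> nat \<Rightarrow> (real \<Rightarrow> real \<Rightarrow> real) \<Rightarrow> bool" where
  "spanlt G n f \<longleftrightarrow> (\<exists>d. \<forall>x y. f x y = (\<Sum>p\<in>idx n. d p * opoly G (fst p) (snd p) x y))"

lemma span_eq: "spanlt G n f \<Longrightarrow> (\<And>x y. g x y = f x y) \<Longrightarrow> spanlt G n g"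
  unfolding spanlt_def by metis

lemma span_zero: "spanlt G n (\<lambda>x y. 0)"
  unfolding spanlt_def by (rule exI[of _ "\<lambda>p. 0"]) simp

lemma span_add: "spanlt G n f \<Longrightarrow> spanlt G n g \<Longrightarrow> spanlt G n (\<lambda>x y. f x y + g x y)"
  unfolding spanlt_def
proof (elim exE)
  fix d e assume d: "\<forall>x y. f x y = (\<Sum>p\<in>idx n. d p * opoly G (fst p) (snd p) x y)"
    and e: "\<forall>x y. g x y = (\<Sum>p\<in>idx n. e p * opoly G (fst p) (snd p) x y)"
  show "\<exists>d. \<forall>x y. f x y + g x y = (\<Sum>p\<in>idx n. d p * opoly G (fst p) (snd p) x y)"
    by (rule exI[of _ "\<lambda>p. d p + e p"]) (simp add: d e distrib_right sum.distrib)
qed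

lemma span_scale: "spanlt G n f \<Longrightarrow> spanlt G n (\<lambda>x y. c * f x y)"
  unfolding spanlt_def
proof (elim exE)
  fix d assume d: "\<forall>x y. f x y = (\<Sum>p\<in>idx n. d p * opoly G (fst p) (snd p) x y)"
  show "\<exists>d. \<forall>x y. c * f x y = (\<Sum>p\<in>idx n. d p * opoly G (fst p) (snd p) x y)"
    by (rule exI[of _ "\<lambda>p. c * d p"]) (simp add: d sum_distrib_left mult.assoc)
qed

lemma span_sum: "finite S \<Longrightarrow> (\<And>s. s \<in> S \<Longrightarrow> spanlt G n (F s)) \<Longrightarrow> spanlt G n (\<lambda>x y. \<Sum>s\<in>S. F s x y)"
proof (induction S rule: finite_induct)
  case empty then show ?case by (simp add: span_zero)
next
  case (insert a S)
  then show ?case by (simp add: span_add)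
qed

lemma span_mono: assumes "spanlt G n f" "n \<le> m" shows "spanlt G m f"
proof -
  from assms(1) obtain d where d: "\<And>x y. f x y = (\<Sum>p\<in>idx n. d p * opoly G (fst p) (snd p) x y)"
    unfolding spanlt_def by blast
  have sub: "idx n \<subseteq> idx m" using assms(2) unfolding idx_def by auto
  show ?thesis unfolding spanlt_def
  proof (intro exI allI)
    fix x y
    show "f x y = (\<Sum>p\<in>idx m. (if p \<in> idx n then d p else 0) * opoly G (fst p) (snd p) x y)"
      unfolding d by (rule sum.mono_neutral_cong_left) (use sub in auto)
  qed
qed

lemma span_P: assumes "j \<le> k" "k < n" shows "spanlt G n (opoly G k j)"
  unfolding spanlt_def
proof (intro exI allI)
  fix x y
  have "(k,j) \<in> idx n" using assms unfolding idx_def by auto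
  then show "opoly G k j x y = (\<Sum>p\<in>idx n. (if p = (k,j) then 1 else 0) * opoly G (fst p) (snd p) x y)"
  proof -
    have "(\<Sum>p\<in>idx n. (if p = (k,j) then 1 else 0) * opoly G (fst p) (snd p) x y)
        = (\<Sum>p\<in>idx n. (if p = (k,j) then opoly G k j x y else 0))"
      by (rule sum.cong) auto
    then show ?thesis using \<open>(k,j) \<in> idx n\<close> by simp
  qed
qed

lemma three_term_eq: "three_term G z A \<Longrightarrow> i \<le> n \<Longrightarrow>
        z x y * opoly G n i x y =
          (\<Sum>j\<le>n+1. A n $$ (i, j) * opoly G (n+1) j x y) +
          (\<Sum>j<n. prevA A n $$ (j, i) * opoly G (n-1) j x y)"
  unfolding three_term_def by blast

lemma span_mult: assumes T: "three_term G z A" and f: "spanlt G n f"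
  shows "spanlt G (n+1) (\<lambda>x y. z x y * f x y)"
proof -
  from f obtain d where d: "\<And>x y. f x y = (\<Sum>p\<in>idx n. d p * opoly G (fst p) (snd p) x y)"
    unfolding spanlt_def by blast
  have "spanlt G (n+1) (\<lambda>x y. \<Sum>p\<in>idx n. d p * ((\<Sum>j\<le>fst p+1. A (fst p) $$ (snd p, j) * opoly G (fst p+1) j x y) +
          (\<Sum>j<fst p. prevA A (fst p) $$ (j, snd p) * opoly G (fst p-1) j x y)))"
  proof (intro span_sum span_scale span_add finite_idx finite_atMost finite_lessThan)
    fix p j assume p: "p \<in> idx n"
    { assume "j \<in> {..fst p + 1}"
      then show "spanlt G (n + 1) (opoly G (fst p + 1) j)" using p by (intro span_P) (auto simp: idx_def) }
    { assume "j \<in> {..<fst p}"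
      then show "spanlt G (n + 1) (opoly G (fst p - 1) j)" using p by (intro span_P) (auto simp: idx_def) }
  qed
  then show ?thesis
  proof (rule span_eq)
    fix x y
    have "z x y * f x y = (\<Sum>p\<in>idx n. d p * (z x y * opoly G (fst p) (snd p) x y))"
      unfolding d by (simp add: sum_distrib_left mult_ac)
    also have "\<dots> = (\<Sum>p\<in>idx n. d p * ((\<Sum>j\<le>fst p+1. A (fst p) $$ (snd p, j) * opoly G (fst p+1) j x y) +
          (\<Sum>j<fst p. prevA A (fst p) $$ (j, snd p) * opoly G (fst p-1) j x y)))"
      by (intro sum.cong refl arg_cong2[where f="(*)"] three_term_eq[OF T]) (auto simp: idx_def)
    finally show "z x y * f x y = \<dots>" .
  qed
qed


lemma opoly_meas: "(\<lambda>(x,y). opoly G k j x y) \<in> borel_measurable lborel"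
  unfolding opoly_def case_prod_beta' measurable_lborel2 by (intro borel_measurable_continuous_onI continuous_intros)

lemma weight_meas: "(\<lambda>(x,y). weight a b c d e x y) \<in> borel_measurable lborel"
  unfolding weight_def qform_def case_prod_beta' measurable_lborel2 by (intro borel_measurable_continuous_onI continuous_intros)

locale osys =
  fixes W :: "real \<Rightarrow> real \<Rightarrow> real" and G :: "nat \<Rightarrow> nat \<Rightarrow> real mat" and A1 A2 :: "nat \<Rightarrow> real mat"
  assumes ON: "orthonormal_system W G"
    and T1: "three_term G (\<lambda>x y. x) A1" and T2: "three_term G (\<lambda>x y. y) A2"
    and Wnn: "\<And>x y. 0 \<le> W x y"
    and Wm: "(\<lambda>(x,y). W x y) \<in> borel_measurable lborel"
begin

abbreviation P where "P \<equiv> opoly G"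

lemma Gcar: "k \<le> n \<Longrightarrow> G n k \<in> carrier_mat (n+1) (k+1)"
  using ON unfolding orthonormal_system_def by blast

lemma ipP: "i \<le> n \<Longrightarrow> j \<le> m \<Longrightarrow> ip W (P n i) (P m j) = (if n = m \<and> i = j then 1 else 0)"
  using ON unfolding orthonormal_system_def by blast

lemma G00: "G 0 0 $$ (0,0) \<noteq> 0"
  using ON unfolding orthonormal_system_def by force

lemma span_mono1: "j \<le> k \<Longrightarrow> k < n \<Longrightarrow> spanlt G n (\<lambda>x y. x^(k-j) * y^j)"
proof (induction k arbitrary: j n)
  case 0
  then have j: "j = 0" by simp
  have "spanlt G n (\<lambda>x y. (1 / G 0 0 $$ (0,0)) * P 0 0 x y)"
    using 0 by (intro span_scale span_P) auto
  then show ?case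
  proof (rule span_eq)
    fix x y show "x ^ (0 - j) * y ^ j = 1 / G 0 0 $$ (0, 0) * P 0 0 x y"
      using G00 j by (simp add: opoly_def)
  qed
next
  case (Suc k)
  show ?case
  proof (cases "j \<le> k")
    case True
    have "spanlt G (k+1) (\<lambda>x y. x^(k-j) * y^j)" using True by (intro Suc.IH) auto
    then have "spanlt G (k+2) (\<lambda>x y. x * (x^(k-j) * y^j))" using span_mult[OF T1] by fastforce
    then have "spanlt G n (\<lambda>x y. x * (x^(k-j) * y^j))" by (rule span_mono) (use Suc in auto)
    then show ?thesis
      by (rule span_eq) (use True in \<open>auto simp: Suc_diff_le\<close>)
  next
    case False
    then have j: "j = Suc k" using Suc by auto
    have "spanlt G (k+1) (\<lambda>x y. x^(k-k) * y^k)" by (intro Suc.IH) auto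
    then have "spanlt G (k+2) (\<lambda>x y. y * (x^(k-k) * y^k))" using span_mult[OF T2] by fastforce
    then have "spanlt G n (\<lambda>x y. y * (x^(k-k) * y^k))" by (rule span_mono) (use Suc in auto)
    then show ?thesis
      by (rule span_eq) (use j in auto)
  qed
qed

lemma int_sq: assumes "i \<le> n" shows "integrable lborel (\<lambda>(x,y). P n i x y * P n i x y * W x y)"
proof (rule ccontr)
  assume "\<not> ?thesis"
  then have "ip W (P n i) (P n i) = 0" unfolding ip_def by (rule not_integrable_integral_eq)
  with ipP[OF assms assms] show False by simp
qed

lemma int_PP: assumes "i \<le> n" "j \<le> m"
  shows "integrable lborel (\<lambda>(x,y). P n i x y * P m j x y * W x y)"
proof (rule Bochner_Integration.integrable_bound[rotated])
  show "integrable lborel (\<lambda>z. (\<lambda>(x,y). P n i x y * P n i x y * W x y) z + (\<lambda>(x,y). P m j x y * P m j x y * W x y) z)"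
    by (intro Bochner_Integration.integrable_add int_sq assms)
  show "(\<lambda>(x,y). P n i x y * P m j x y * W x y) \<in> borel_measurable lborel"
    using borel_measurable_times[OF borel_measurable_times[OF opoly_meas[of G n i] opoly_meas[of G m j]] Wm]
    by (simp add: case_prod_beta')
  show "AE z in lborel. norm ((\<lambda>(x,y). P n i x y * P m j x y * W x y) z) \<le>
     norm ((\<lambda>(x,y). P n i x y * P n i x y * W x y) z + (\<lambda>(x,y). P m j x y * P m j x y * W x y) z)"
  proof (rule AE_I2, clarify)
    fix x y
    let ?a = "P n i x y" and ?b = "P m j x y" and ?w = "W x y"
    have w: "0 \<le> ?w" by (rule Wnn)
    have s0: "0 \<le> (\<bar>?a\<bar> - \<bar>?b\<bar>) * (\<bar>?a\<bar> - \<bar>?b\<bar>)" by simp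
    have s1: "2 * (\<bar>?a\<bar> * \<bar>?b\<bar>) \<le> \<bar>?a\<bar> * \<bar>?a\<bar> + \<bar>?b\<bar> * \<bar>?b\<bar>"
      using s0 by (simp add: algebra_simps)
    have s2: "0 \<le> \<bar>?a\<bar> * \<bar>?b\<bar>" by simp
    have "\<bar>?a * ?b\<bar> \<le> ?a * ?a + ?b * ?b"
      using s1 s2 by (simp add: abs_mult abs_mult_self_eq, linarith)
    then have "\<bar>?a * ?b\<bar> * ?w \<le> (?a * ?a + ?b * ?b) * ?w" using w by (rule mult_right_mono)
    then show "norm (?a * ?b * ?w) \<le> norm (?a * ?a * ?w + ?b * ?b * ?w)"
      using w by (simp add: abs_mult distrib_right)
  qed
qed

end


lemma lin_eq: "(\<lambda>(x,y). (\<Sum>s\<in>S. c s * F s x y) * g x y * W x y) =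
   (\<lambda>z. \<Sum>s\<in>S. c s * (\<lambda>(x,y). F s x y * g x y * (W x y::real)) z)"
  by (auto simp: fun_eq_iff sum_distrib_right mult.assoc)

lemma lin_int: "finite S \<Longrightarrow> (\<And>s. s\<in>S \<Longrightarrow> integrable lborel (\<lambda>(x,y). F s x y * g x y * W x y)) \<Longrightarrow>
   integrable lborel (\<lambda>(x,y). (\<Sum>s\<in>S. c s * F s x y) * g x y * (W x y::real))"
  unfolding lin_eq by (intro Bochner_Integration.integrable_sum Bochner_Integration.integrable_mult_right) auto

lemma lin_ip: "finite S \<Longrightarrow> (\<And>s. s\<in>S \<Longrightarrow> integrable lborel (\<lambda>(x,y). F s x y * g x y * W x y)) \<Longrightarrow>
   ip W (\<lambda>x y. \<Sum>s\<in>S. c s * F s x y) g = (\<Sum>s\<in>S. c s * ip W (F s) g)"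
  unfolding ip_def lin_eq by (subst Bochner_Integration.integral_sum) (auto intro: Bochner_Integration.integrable_mult_right)

lemma ip_sym: "ip W f g = ip W g f"
  unfolding ip_def by (simp add: mult.commute)

lemma ip_scale1: "ip W (\<lambda>x y. c * f x y) g = c * ip W f g"
proof -
  have "(\<lambda>(x,y). c * f x y * g x y * W x y) = (\<lambda>z. c * (\<lambda>(x,y). f x y * g x y * W x y) z)"
    by (auto simp: fun_eq_iff mult.assoc)
  then show ?thesis unfolding ip_def by simp
qed

lemma ip_add1: "integrable lborel (\<lambda>(x,y). f x y * h x y * W x y) \<Longrightarrow> integrable lborel (\<lambda>(x,y). g x y * h x y * W x y) \<Longrightarrow>
   ip W (\<lambda>x y. f x y + g x y) h = ip W f h + ip W g h"
  unfolding ip_def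
proof -
  assume a: "integrable lborel (\<lambda>(x,y). f x y * h x y * W x y)" "integrable lborel (\<lambda>(x,y). g x y * h x y * W x y)"
  have "(\<lambda>(x,y). (f x y + g x y) * h x y * W x y) = (\<lambda>z. (\<lambda>(x,y). f x y * h x y * W x y) z + (\<lambda>(x,y). g x y * h x y * W x y) z)"
    by (auto simp: fun_eq_iff algebra_simps)
  then show "integral\<^sup>L lborel (\<lambda>(x, y). (f x y + g x y) * h x y * W x y) =
    integral\<^sup>L lborel (\<lambda>(x, y). f x y * h x y * W x y) + integral\<^sup>L lborel (\<lambda>(x, y). g x y * h x y * W x y)"
    using a by (simp add: Bochner_Integration.integral_add)
qed

context osys begin

lemma int_Pspan: assumes "j \<le> k" "spanlt G b g"
  shows "integrable lborel (\<lambda>(x,y). P k j x y * g x y * W x y)"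
proof -
  from assms(2) obtain d where d: "\<And>x y. g x y = (\<Sum>p\<in>idx b. d p * P (fst p) (snd p) x y)"
    unfolding spanlt_def by blast
  have "integrable lborel (\<lambda>(x,y). (\<Sum>p\<in>idx b. d p * P (fst p) (snd p) x y) * P k j x y * W x y)"
    by (rule lin_int) (use assms(1) in \<open>auto simp: idx_def intro!: int_PP\<close>)
  moreover have "(\<lambda>(x,y). (\<Sum>p\<in>idx b. d p * P (fst p) (snd p) x y) * P k j x y * W x y) = (\<lambda>(x,y). P k j x y * g x y * W x y)"
    by (auto simp: fun_eq_iff d)
  ultimately show ?thesis by simp
qed

lemma int_span: assumes "spanlt G a f" "spanlt G b g"
  shows "integrable lborel (\<lambda>(x,y). f x y * g x y * W x y)"
proof -
  from assms(1) obtain d where d: "\<And>x y. f x y = (\<Sum>p\<in>idx a. d p * P (fst p) (snd p) x y)"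
    unfolding spanlt_def by blast
  have "integrable lborel (\<lambda>(x,y). (\<Sum>p\<in>idx a. d p * P (fst p) (snd p) x y) * g x y * W x y)"
    by (rule lin_int) (use assms(2) in \<open>auto simp: idx_def intro!: int_Pspan\<close>)
  then show ?thesis by (simp add: d[abs_def])
qed

lemma orth: assumes "spanlt G n f" "i \<le> n" shows "ip W f (P n i) = 0"
proof -
  from assms(1) obtain d where d: "\<And>x y. f x y = (\<Sum>p\<in>idx n. d p * P (fst p) (snd p) x y)"
    unfolding spanlt_def by blast
  have "ip W f (P n i) = ip W (\<lambda>x y. \<Sum>p\<in>idx n. d p * P (fst p) (snd p) x y) (P n i)"
    by (simp add: d[abs_def])
  also have "\<dots> = (\<Sum>p\<in>idx n. d p * ip W (P (fst p) (snd p)) (P n i))"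
    by (rule lin_ip) (use assms(2) in \<open>auto simp: idx_def intro!: int_PP\<close>)
  also have "\<dots> = 0"
    by (rule sum.neutral) (use assms(2) in \<open>auto simp: idx_def ipP\<close>)
  finally show ?thesis .
qed

lemma orth': assumes "spanlt G n f" "i \<le> n" shows "ip W (P n i) f = 0"
  using orth[OF assms] by (simp add: ip_sym)

end


lemma prevA_car: "(\<And>n. A n \<in> carrier_mat (n+1) (n+2)) \<Longrightarrow> prevA A m \<in> carrier_mat m (m+1)"
  unfolding prevA_def by (cases m) auto

lemma three_term_car: "three_term G z A \<Longrightarrow> A n \<in> carrier_mat (n+1) (n+2)"
  unfolding three_term_def by blast

lemma three_term_prev_car: "three_term G z A \<Longrightarrow> prevA A m \<in> carrier_mat m (m+1)"
  by (rule prevA_car) (rule three_term_car)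

context osys begin

definition Gm :: "nat \<Rightarrow> nat \<Rightarrow> nat \<Rightarrow> (nat \<Rightarrow> real \<Rightarrow> real \<Rightarrow> real) \<Rightarrow> real mat" where
  "Gm r m c F = mat r c (\<lambda>(a,j). ip W (P m a) (F j))"

lemma Gm_car[simp]: "Gm r m c F \<in> carrier_mat r c" unfolding Gm_def by simp
lemma Gm_dim[simp]: "dim_row (Gm r m c F) = r" "dim_col (Gm r m c F) = c" unfolding Gm_def by simp_all
lemma Gm_index[simp]: "a < r \<Longrightarrow> j < c \<Longrightarrow> Gm r m c F $$ (a,j) = ip W (P m a) (F j)"
  unfolding Gm_def by simp

lemma Gm_zero: assumes "\<And>j. j < c \<Longrightarrow> spanlt G m (F j)" "r \<le> m + 1"
  shows "Gm r m c F = 0\<^sub>m r c"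
  by (rule eq_matI) (use assms in \<open>auto intro!: orth'\<close>)

lemma Gm_P0: assumes "k \<noteq> n" "r \<le> k + 1" shows "Gm r k (n+1) (P n) = 0\<^sub>m r (n+1)"
  by (rule eq_matI) (use assms in \<open>auto simp: ipP\<close>)

lemma Gm_P1: "Gm (n+1) n (n+1) (P n) = 1\<^sub>m (n+1)"
  by (rule eq_matI) (auto simp: ipP)

lemma step: assumes T: "three_term G z A" and F: "\<And>j. j < c \<Longrightarrow> spanlt G N (F j)"
  shows "Gm (m+1) m c (\<lambda>j x y. z x y * F j x y)
     = A m * Gm (m+2) (m+1) c F + transpose_mat (prevA A m) * Gm m (m-1) c F"
proof (rule eq_matI)
  have Ac: "A m \<in> carrier_mat (m+1) (m+2)" by (rule three_term_car[OF T])
  have Pc: "prevA A m \<in> carrier_mat m (m+1)" by (rule three_term_prev_car[OF T])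
  show "dim_row (Gm (m+1) m c (\<lambda>j x y. z x y * F j x y)) = dim_row (A m * Gm (m+2) (m+1) c F + transpose_mat (prevA A m) * Gm m (m-1) c F)"
    using Ac Pc by simp
  show "dim_col (Gm (m+1) m c (\<lambda>j x y. z x y * F j x y)) = dim_col (A m * Gm (m+2) (m+1) c F + transpose_mat (prevA A m) * Gm m (m-1) c F)"
    using Ac Pc by simp
  fix a j assume "a < dim_row (A m * Gm (m+2) (m+1) c F + transpose_mat (prevA A m) * Gm m (m-1) c F)"
    "j < dim_col (A m * Gm (m+2) (m+1) c F + transpose_mat (prevA A m) * Gm m (m-1) c F)"
  then have a: "a < m+1" and j: "j < c" using Ac Pc by auto
  have FS: "spanlt G N (F j)" using F j .
  have "Gm (m+1) m c (\<lambda>j x y. z x y * F j x y) $$ (a,j) = ip W (P m a) (\<lambda>x y. z x y * F j x y)"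
    using a j by simp
  also have "\<dots> = ip W (\<lambda>x y. z x y * P m a x y) (F j)"
    unfolding ip_def by (simp add: mult_ac)
  also have "\<dots> = ip W (\<lambda>x y. (\<Sum>l\<le>m+1. A m $$ (a, l) * P (m+1) l x y) +
          (\<Sum>l<m. prevA A m $$ (l, a) * P (m-1) l x y)) (F j)"
    using three_term_eq[OF T, of a m] a by simp
  also have "\<dots> = ip W (\<lambda>x y. (\<Sum>l\<le>m+1. A m $$ (a, l) * P (m+1) l x y)) (F j) +
       ip W (\<lambda>x y. (\<Sum>l<m. prevA A m $$ (l, a) * P (m-1) l x y)) (F j)"
    by (intro ip_add1 lin_int) (auto intro!: int_Pspan[OF _ FS])
  also have "\<dots> = (\<Sum>l\<le>m+1. A m $$ (a, l) * ip W (P (m+1) l) (F j)) +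
       (\<Sum>l<m. prevA A m $$ (l, a) * ip W (P (m-1) l) (F j))"
    by (intro arg_cong2[where f="(+)"] lin_ip) (auto intro!: int_Pspan[OF _ FS])
  also have "\<dots> = (A m * Gm (m+2) (m+1) c F + transpose_mat (prevA A m) * Gm m (m-1) c F) $$ (a,j)"
  proof -
    have e1: "(A m * Gm (m+2) (m+1) c F) $$ (a,j) = (\<Sum>l\<le>m+1. A m $$ (a, l) * ip W (P (m+1) l) (F j))"
      using Ac a j by (simp add: scalar_prod_def atLeast0LessThan lessThan_Suc_atMost[symmetric])
    have e2: "(transpose_mat (prevA A m) * Gm m (m-1) c F) $$ (a,j) = (\<Sum>l<m. prevA A m $$ (l, a) * ip W (P (m-1) l) (F j))"
      using Pc a j by (simp add: scalar_prod_def atLeast0LessThan)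
    show ?thesis using e1 e2 Ac Pc a j by simp
  qed
  finally show "Gm (m+1) m c (\<lambda>j x y. z x y * F j x y) $$ (a,j) = (A m * Gm (m+2) (m+1) c F + transpose_mat (prevA A m) * Gm m (m-1) c F) $$ (a,j)" .
qed

end


context osys begin

lemma spanP: "j < Suc n \<Longrightarrow> spanlt G (Suc n) (P n j)" by (rule span_P) auto

lemma L_a: assumes TA: "three_term G z A"
  shows "Gm (n+2) (n+1) (n+1) (\<lambda>j x y. z x y * P n j x y) = transpose_mat (A n)"
proof -
  have Ac: "A n \<in> carrier_mat (n+1) (n+2)" "A (n+1) \<in> carrier_mat (n+2) (n+3)"
    using three_term_car[OF TA, of n] three_term_car[OF TA, of "n+1"] by (auto simp: eval_nat_numeral)
  have "Gm (n+1+1) (n+1) (n+1) (\<lambda>j x y. z x y * P n j x y)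
     = A (n+1) * Gm (n+1+2) (n+1+1) (n+1) (P n) + transpose_mat (prevA A (n+1)) * Gm (n+1) (n+1-1) (n+1) (P n)"
    by (rule step[OF TA, of _ "n+1"]) (auto intro: spanP)
  also have "\<dots> = A (n+1) * 0\<^sub>m (n+3) (n+1) + transpose_mat (A n) * 1\<^sub>m (n+1)"
    using Gm_P0[of "n+2" n "n+3"] Gm_P1[of n] by (simp add: prevA_def eval_nat_numeral)
  also have "\<dots> = transpose_mat (A n)" using Ac by simp
  finally show ?thesis by simp
qed


lemma L_prev: assumes TA: "three_term G z A"
  shows "Gm n (n-1) (n+1) (\<lambda>j x y. z x y * P n j x y) = prevA A n"
proof (cases n)
  case 0
  then show ?thesis by (intro eq_matI) (auto simp: prevA_def)
next
  case (Suc k)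
  have Ac: "A k \<in> carrier_mat (k+1) (k+2)" using three_term_car[OF TA] by auto
  have Pc: "prevA A k \<in> carrier_mat k (k+1)" by (rule three_term_prev_car[OF TA])
  have "Gm (k+1) k (k+2) (\<lambda>j x y. z x y * P (k+1) j x y)
     = A k * Gm (k+2) (k+1) (k+2) (P (k+1)) + transpose_mat (prevA A k) * Gm k (k-1) (k+2) (P (k+1))"
    using step[OF TA, of "k+2" "k+2" "P (k+1)" k] by (simp add: spanP)
  also have "\<dots> = A k * 1\<^sub>m (k+2) + transpose_mat (prevA A k) * 0\<^sub>m k (k+2)"
    using Gm_P1[of "k+1"] Gm_P0[of "k-1" "k+1" k] by simp
  also have "\<dots> = A k" using Ac Pc by simp
  finally show ?thesis using Suc by (simp add: prevA_def)
qed


lemma L_hi: assumes TA: "three_term G z A" and TB: "three_term G w B"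
  shows "Gm (n+3) (n+2) (n+1) (\<lambda>j x y. w x y * (z x y * P n j x y)) = transpose_mat (B (n+1)) * transpose_mat (A n)"
proof -
  have Bc: "B (n+2) \<in> carrier_mat (n+3) (n+4)" using three_term_car[OF TB, of "n+2"] by (simp add: eval_nat_numeral)
  have Ac: "A n \<in> carrier_mat (n+1) (n+2)" using three_term_car[OF TA, of n] by simp
  have sp: "\<And>j. j < n+1 \<Longrightarrow> spanlt G (n+2) (\<lambda>x y. z x y * P n j x y)"
    using span_mult[OF TA spanP] by fastforce
  have "Gm (n+2+1) (n+2) (n+1) (\<lambda>j x y. w x y * (z x y * P n j x y))
     = B (n+2) * Gm (n+2+2) (n+2+1) (n+1) (\<lambda>j x y. z x y * P n j x y)
       + transpose_mat (prevA B (n+2)) * Gm (n+2) (n+2-1) (n+1) (\<lambda>j x y. z x y * P n j x y)"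
    by (rule step[OF TB]) (use sp in auto)
  also have "Gm (n+2+2) (n+2+1) (n+1) (\<lambda>j x y. z x y * P n j x y) = 0\<^sub>m (n+2+2) (n+1)"
    by (rule Gm_zero) (use sp in \<open>auto intro: span_mono[of _ "Suc (Suc n)"]\<close>)
  also have "Gm (n+2) (n+2-1) (n+1) (\<lambda>j x y. z x y * P n j x y) = transpose_mat (A n)"
    using L_a[OF TA, of n] by simp
  also have "B (n+2) * 0\<^sub>m (n+2+2) (n+1) = 0\<^sub>m (n+3) (n+1)" using Bc by (simp add: eval_nat_numeral)
  also have "transpose_mat (prevA B (n+2)) = transpose_mat (B (n+1))" by (simp add: prevA_def)
  also have "0\<^sub>m (n+3) (n+1) + transpose_mat (B (n+1)) * transpose_mat (A n) = transpose_mat (B (n+1)) * transpose_mat (A n)"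
  proof -
    have "B (n+1) \<in> carrier_mat (n+2) (n+3)" using three_term_car[OF TB, of "n+1"] by (simp add: eval_nat_numeral)
    then have "transpose_mat (B (n+1)) * transpose_mat (A n) \<in> carrier_mat (n+3) (n+1)" using Ac by simp
    then show ?thesis by simp
  qed
  finally show ?thesis by (simp add: eval_nat_numeral)
qed


lemma L_mid: assumes TA: "three_term G z A" and TB: "three_term G w B"
  shows "Gm (n+1) n (n+1) (\<lambda>j x y. w x y * (z x y * P n j x y)) = B n * transpose_mat (A n) + transpose_mat (prevA B n) * prevA A n"
proof -
  have sp: "\<And>j. j < n+1 \<Longrightarrow> spanlt G (n+2) (\<lambda>x y. z x y * P n j x y)"
    using span_mult[OF TA spanP] by fastforce
  have "Gm (n+1) n (n+1) (\<lambda>j x y. w x y * (z x y * P n j x y))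
     = B n * Gm (n+2) (n+1) (n+1) (\<lambda>j x y. z x y * P n j x y)
       + transpose_mat (prevA B n) * Gm n (n-1) (n+1) (\<lambda>j x y. z x y * P n j x y)"
    by (rule step[OF TB]) (use sp in auto)
  then show ?thesis using L_a[OF TA, of n] L_prev[OF TA, of n] by simp
qed


lemma L_top: assumes TA: "three_term G z A" and TB: "three_term G w B" and TC: "three_term G v C"
  shows "Gm (n+2) (n+1) (n+1) (\<lambda>j x y. v x y * (w x y * (z x y * P n j x y)))
     = C (n+1) * (transpose_mat (B (n+1)) * transpose_mat (A n))
       + transpose_mat (C n) * (B n * transpose_mat (A n) + transpose_mat (prevA B n) * prevA A n)"
proof -
  have sp: "spanlt G (n+3) (\<lambda>x y. w x y * (z x y * P n j x y))" if "j < n+1" for j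
  proof -
    have "spanlt G (Suc n) (P n j)" using that by (intro spanP) simp
    then have "spanlt G (Suc n + 1) (\<lambda>x y. z x y * P n j x y)" by (rule span_mult[OF TA])
    then have "spanlt G (Suc n + 1 + 1) (\<lambda>x y. w x y * (z x y * P n j x y))" by (rule span_mult[OF TB])
    then show ?thesis by (simp add: eval_nat_numeral)
  qed
  have "Gm (n+1+1) (n+1) (n+1) (\<lambda>j x y. v x y * (w x y * (z x y * P n j x y)))
     = C (n+1) * Gm (n+1+2) (n+1+1) (n+1) (\<lambda>j x y. w x y * (z x y * P n j x y))
       + transpose_mat (prevA C (n+1)) * Gm (n+1) (n+1-1) (n+1) (\<lambda>j x y. w x y * (z x y * P n j x y))"
    by (rule step[OF TC]) (use sp in auto)
  also have "Gm (n+1+2) (n+1+1) (n+1) (\<lambda>j x y. w x y * (z x y * P n j x y)) = transpose_mat (B (n+1)) * transpose_mat (A n)"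
    using L_hi[OF TA TB, of n] by (simp add: eval_nat_numeral)
  also have "Gm (n+1) (n+1-1) (n+1) (\<lambda>j x y. w x y * (z x y * P n j x y)) = B n * transpose_mat (A n) + transpose_mat (prevA B n) * prevA A n"
    using L_mid[OF TA TB, of n] by simp
  also have "prevA C (n+1) = C n" by (simp add: prevA_def)
  finally show ?thesis by (simp add: eval_nat_numeral)
qed

lemma Gm_lin: assumes F1: "\<And>j. j < c \<Longrightarrow> spanlt G N (F1 j)" and F2: "\<And>j. j < c \<Longrightarrow> spanlt G N (F2 j)"
    and F3: "\<And>j. j < c \<Longrightarrow> spanlt G N (F3 j)" and r: "r \<le> m+1"
  shows "Gm r m c (\<lambda>j x y. \<alpha> * F1 j x y + \<beta> * F2 j x y + \<gamma> * F3 j x y)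
    = \<alpha> \<cdot>\<^sub>m Gm r m c F1 + \<beta> \<cdot>\<^sub>m Gm r m c F2 + \<gamma> \<cdot>\<^sub>m Gm r m c F3"
proof (rule eq_matI)
  fix a j assume "a < dim_row (\<alpha> \<cdot>\<^sub>m Gm r m c F1 + \<beta> \<cdot>\<^sub>m Gm r m c F2 + \<gamma> \<cdot>\<^sub>m Gm r m c F3)"
    "j < dim_col (\<alpha> \<cdot>\<^sub>m Gm r m c F1 + \<beta> \<cdot>\<^sub>m Gm r m c F2 + \<gamma> \<cdot>\<^sub>m Gm r m c F3)"
  then have a: "a < r" and j: "j < c" by auto
  have sP: "spanlt G (m+1) (P m a)" using a r by (intro span_P) auto
  have s1: "spanlt G N (F1 j)" "spanlt G N (F2 j)" "spanlt G N (F3 j)" using F1 F2 F3 j by auto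
  have "ip W (P m a) (\<lambda>x y. \<alpha> * F1 j x y + \<beta> * F2 j x y + \<gamma> * F3 j x y)
      = ip W (\<lambda>x y. (\<alpha> * F1 j x y + \<beta> * F2 j x y) + \<gamma> * F3 j x y) (P m a)"
    by (simp add: ip_sym)
  also have "\<dots> = ip W (\<lambda>x y. \<alpha> * F1 j x y + \<beta> * F2 j x y) (P m a) + ip W (\<lambda>x y. \<gamma> * F3 j x y) (P m a)"
    by (intro ip_add1 int_span[OF _ sP, where a=N] span_add span_scale s1)
  also have "ip W (\<lambda>x y. \<alpha> * F1 j x y + \<beta> * F2 j x y) (P m a) = ip W (\<lambda>x y. \<alpha> * F1 j x y) (P m a) + ip W (\<lambda>x y. \<beta> * F2 j x y) (P m a)"
    by (intro ip_add1 int_span[OF _ sP, where a=N] span_add span_scale s1)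
  finally have "ip W (P m a) (\<lambda>x y. \<alpha> * F1 j x y + \<beta> * F2 j x y + \<gamma> * F3 j x y)
     = \<alpha> * ip W (P m a) (F1 j) + \<beta> * ip W (P m a) (F2 j) + \<gamma> * ip W (P m a) (F3 j)"
    by (simp add: ip_scale1 ip_sym)
  then show "Gm r m c (\<lambda>j x y. \<alpha> * F1 j x y + \<beta> * F2 j x y + \<gamma> * F3 j x y) $$ (a, j) =
         (\<alpha> \<cdot>\<^sub>m Gm r m c F1 + \<beta> \<cdot>\<^sub>m Gm r m c F2 + \<gamma> \<cdot>\<^sub>m Gm r m c F3) $$ (a, j)"
    using a j by simp
qed auto

end


definition dPx :: "(nat \<Rightarrow> nat \<Rightarrow> real mat) \<Rightarrow> nat \<Rightarrow> nat \<Rightarrow> real \<Rightarrow> real \<Rightarrow> real" where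
  "dPx G n i x y = (\<Sum>k\<le>n. \<Sum>j\<le>k. G n k $$ (i, j) * (real (k - j) * x ^ (k - j - 1)) * y ^ j)"

definition dPy :: "(nat \<Rightarrow> nat \<Rightarrow> real mat) \<Rightarrow> nat \<Rightarrow> nat \<Rightarrow> real \<Rightarrow> real \<Rightarrow> real" where
  "dPy G n i x y = (\<Sum>k\<le>n. \<Sum>j\<le>k. G n k $$ (i, j) * x ^ (k - j) * (real j * y ^ (j - 1)))"

lemma Dpow: "((\<lambda>x::real. x ^ m) has_real_derivative real m * x ^ (m - 1)) (at x)"
  using DERIV_pow[of m x] by simp

lemma D_x: "((\<lambda>x. opoly G n i x y) has_real_derivative dPx G n i x y) (at x)"
  unfolding opoly_def dPx_def
  by (intro DERIV_sum DERIV_cmult_right DERIV_cmult Dpow)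

lemma D_y: "((\<lambda>y. opoly G n i x y) has_real_derivative dPy G n i x y) (at y)"
  unfolding opoly_def dPy_def
  by (intro DERIV_sum DERIV_cmult Dpow)


context osys begin

lemma span_dPx: "spanlt G n (dPx G n i)"
proof -
  have "spanlt G n (\<lambda>x y. \<Sum>k\<le>n. \<Sum>j\<le>k. G n k $$ (i, j) * (real (k - j) * x ^ (k - j - 1)) * y ^ j)"
  proof (intro span_sum finite_atMost)
    fix k j assume k: "k \<in> {..n}" and j: "j \<in> {..k}"
    show "spanlt G n (\<lambda>x y. G n k $$ (i, j) * (real (k - j) * x ^ (k - j - 1)) * y ^ j)"
    proof (cases "k = j")
      case True
      show ?thesis by (rule span_eq[OF span_zero]) (simp add: True)
    next
      case False
      then have "spanlt G n (\<lambda>x y. (G n k $$ (i, j) * real (k - j)) * (x ^ ((k - 1) - j) * y ^ j))"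
        using k j by (intro span_scale span_mono1) auto
      then show ?thesis by (rule span_eq) (simp add: mult_ac)
    qed
  qed
  then show ?thesis unfolding dPx_def[abs_def] .
qed

lemma span_dPy: "spanlt G n (dPy G n i)"
proof -
  have "spanlt G n (\<lambda>x y. \<Sum>k\<le>n. \<Sum>j\<le>k. G n k $$ (i, j) * x ^ (k - j) * (real j * y ^ (j - 1)))"
  proof (intro span_sum finite_atMost)
    fix k j assume k: "k \<in> {..n}" and j: "j \<in> {..k}"
    show "spanlt G n (\<lambda>x y. G n k $$ (i, j) * x ^ (k - j) * (real j * y ^ (j - 1)))"
    proof (cases "j = 0")
      case True
      show ?thesis by (rule span_eq[OF span_zero]) (simp add: True)
    next
      case False
      have e: "(k - 1) - (j - 1) = k - j" using False j by auto
      have m: "spanlt G n (\<lambda>x y. x ^ (k - j) * y ^ (j - 1))"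
        using span_mono1[of "j-1" "k-1" n] e k j False by auto
      have "spanlt G n (\<lambda>x y. (G n k $$ (i, j) * real j) * (x ^ (k - j) * y ^ (j - 1)))"
        by (rule span_scale[OF m])
      then show ?thesis by (rule span_eq) (simp add: mult_ac)
    qed
  qed
  then show ?thesis unfolding dPy_def[abs_def] .
qed

lemma opoly_split: "P n i x y = (\<Sum>k<n. \<Sum>j\<le>k. G n k $$ (i, j) * x ^ (k - j) * y ^ j)
    + (\<Sum>l\<le>n. G n n $$ (i, l) * x ^ (n - l) * y ^ l)"
  unfolding opoly_def lessThan_Suc_atMost[symmetric] by simp

lemma span_low: "spanlt G n (\<lambda>x y. \<Sum>k<n. \<Sum>j\<le>k. c k j * x ^ (k - j) * y ^ j)"
proof (intro span_sum finite_atMost finite_lessThan)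
  fix k j assume "k \<in> {..<n}" "j \<in> {..k}"
  then have "spanlt G n (\<lambda>x y. c k j * (x ^ (k - j) * y ^ j))" by (intro span_scale span_mono1) auto
  then show "spanlt G n (\<lambda>x y. c k j * x ^ (k - j) * y ^ j)" by (rule span_eq) (simp add: mult_ac)
qed

lemma P_low: "spanlt G n (\<lambda>x y. P n i x y - (\<Sum>l\<le>n. G n n $$ (i, l) * x ^ (n - l) * y ^ l))"
  by (rule span_eq[OF span_low]) (simp add: opoly_split)

lemma xdP_split: "x * dPx G n i x y = (\<Sum>k<n. \<Sum>j\<le>k. (G n k $$ (i, j) * real (k - j)) * x ^ (k - j) * y ^ j)
    + (\<Sum>l\<le>n. G n n $$ (i, l) * real (n - l) * x ^ (n - l) * y ^ l)"
proof -
  have t: "x * (c * (real (k - j) * x ^ (k - j - 1)) * d) = (c * real (k - j)) * x ^ (k - j) * d" for c d :: real and k j :: nat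
    by (cases "k - j") (auto simp: mult_ac)
  have "x * dPx G n i x y = (\<Sum>k\<le>n. \<Sum>j\<le>k. (G n k $$ (i, j) * real (k - j)) * x ^ (k - j) * y ^ j)"
    unfolding dPx_def sum_distrib_left t ..
  also have "\<dots> = (\<Sum>k<n. \<Sum>j\<le>k. (G n k $$ (i, j) * real (k - j)) * x ^ (k - j) * y ^ j)
    + (\<Sum>l\<le>n. G n n $$ (i, l) * real (n - l) * x ^ (n - l) * y ^ l)"
    unfolding lessThan_Suc_atMost[symmetric] by simp
  finally show ?thesis .
qed

lemma xdP_low: "spanlt G n (\<lambda>x y. x * dPx G n i x y - (\<Sum>l\<le>n. G n n $$ (i, l) * real (n - l) * x ^ (n - l) * y ^ l))"
  by (rule span_eq[OF span_low]) (simp add: xdP_split)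

lemma ydP_split: "y * dPy G n i x y = (\<Sum>k<n. \<Sum>j\<le>k. (G n k $$ (i, j) * real j) * x ^ (k - j) * y ^ j)
    + (\<Sum>l\<le>n. G n n $$ (i, l) * real l * x ^ (n - l) * y ^ l)"
proof -
  have t: "y * (c * x ^ (k - j) * (real j * y ^ (j - 1))) = (c * real j) * x ^ (k - j) * y ^ j" for c :: real and k j :: nat
    by (cases j) (auto simp: mult_ac)
  have "y * dPy G n i x y = (\<Sum>k\<le>n. \<Sum>j\<le>k. (G n k $$ (i, j) * real j) * x ^ (k - j) * y ^ j)"
    unfolding dPy_def sum_distrib_left t ..
  also have "\<dots> = (\<Sum>k<n. \<Sum>j\<le>k. (G n k $$ (i, j) * real j) * x ^ (k - j) * y ^ j)
    + (\<Sum>l\<le>n. G n n $$ (i, l) * real l * x ^ (n - l) * y ^ l)"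
    unfolding lessThan_Suc_atMost[symmetric] by simp
  finally show ?thesis .
qed

lemma ydP_low: "spanlt G n (\<lambda>x y. y * dPy G n i x y - (\<Sum>l\<le>n. G n n $$ (i, l) * real l * x ^ (n - l) * y ^ l))"
  by (rule span_eq[OF span_low]) (simp add: ydP_split)

end


context osys begin

lemma dthree_x: assumes "i \<le> n"
  shows "(\<Sum>k\<le>n+1. A1 n $$ (i,k) * dPx G (n+1) k x y)
    = P n i x y + x * dPx G n i x y - (\<Sum>l<n. prevA A1 n $$ (l,i) * dPx G (n-1) l x y)"
proof -
  have f: "((\<lambda>x. x * P n i x y) has_real_derivative (1 * P n i x y + dPx G n i x y * x)) (at x)"
    by (rule DERIV_mult[OF DERIV_ident D_x])
  have eq: "(\<lambda>x. x * P n i x y) = (\<lambda>x. (\<Sum>k\<le>n+1. A1 n $$ (i,k) * P (n+1) k x y) + (\<Sum>l<n. prevA A1 n $$ (l,i) * P (n-1) l x y))"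
    by (rule ext) (rule three_term_eq[OF T1 assms])
  have g: "((\<lambda>x. (\<Sum>k\<le>n+1. A1 n $$ (i,k) * P (n+1) k x y) + (\<Sum>l<n. prevA A1 n $$ (l,i) * P (n-1) l x y))
     has_real_derivative ((\<Sum>k\<le>n+1. A1 n $$ (i,k) * dPx G (n+1) k x y) + (\<Sum>l<n. prevA A1 n $$ (l,i) * dPx G (n-1) l x y))) (at x)"
    by (intro DERIV_add DERIV_sum DERIV_cmult D_x)
  from DERIV_unique[OF f[unfolded eq] g] show ?thesis by (simp add: algebra_simps)
qed

lemma dthree_y: assumes "i \<le> n"
  shows "(\<Sum>k\<le>n+1. A2 n $$ (i,k) * dPy G (n+1) k x y)
    = P n i x y + y * dPy G n i x y - (\<Sum>l<n. prevA A2 n $$ (l,i) * dPy G (n-1) l x y)"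
proof -
  have f: "((\<lambda>y. y * P n i x y) has_real_derivative (1 * P n i x y + dPy G n i x y * y)) (at y)"
    by (rule DERIV_mult[OF DERIV_ident D_y])
  have eq: "(\<lambda>y. y * P n i x y) = (\<lambda>y. (\<Sum>k\<le>n+1. A2 n $$ (i,k) * P (n+1) k x y) + (\<Sum>l<n. prevA A2 n $$ (l,i) * P (n-1) l x y))"
    by (rule ext) (rule three_term_eq[OF T2 assms])
  have g: "((\<lambda>y. (\<Sum>k\<le>n+1. A2 n $$ (i,k) * P (n+1) k x y) + (\<Sum>l<n. prevA A2 n $$ (l,i) * P (n-1) l x y))
     has_real_derivative ((\<Sum>k\<le>n+1. A2 n $$ (i,k) * dPy G (n+1) k x y) + (\<Sum>l<n. prevA A2 n $$ (l,i) * dPy G (n-1) l x y))) (at y)"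
    by (intro DERIV_add DERIV_sum DERIV_cmult D_y)
  from DERIV_unique[OF f[unfolded eq] g] show ?thesis by (simp add: algebra_simps)
qed

lemma span_contx: assumes "spanlt G n f" shows "continuous_on UNIV (\<lambda>x. f x y)"
proof -
  from assms obtain d where d: "\<And>x y. f x y = (\<Sum>p\<in>idx n. d p * P (fst p) (snd p) x y)"
    unfolding spanlt_def by blast
  show ?thesis unfolding d opoly_def by (intro continuous_intros)
qed

lemma span_conty: assumes "spanlt G n f" shows "continuous_on UNIV (\<lambda>y. f x y)"
proof -
  from assms obtain d where d: "\<And>x y. f x y = (\<Sum>p\<in>idx n. d p * P (fst p) (snd p) x y)"
    unfolding spanlt_def by blast
  show ?thesis unfolding d opoly_def by (intro continuous_intros)
qed

end

locale osysw = osys +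
  fixes a40 a22 a04 a20 a02 :: real
  assumes Wdef: "W = weight a40 a22 a04 a20 a02"
begin

lemma W_dx: "((\<lambda>x. W x y) has_real_derivative (- (4*a40*x^3 + 2*a22*x*y^2 + 2*a20*x)) * W x y) (at x)"
proof -
  have dq: "((\<lambda>x. qform a40 a22 a04 a20 a02 x y) has_real_derivative (4*a40*x^3 + 2*a22*x*y^2 + 2*a20*x)) (at x)"
    unfolding qform_def by (auto intro!: derivative_eq_intros simp: eval_nat_numeral algebra_simps)
  from DERIV_chain2[OF DERIV_exp DERIV_minus[OF dq]] show ?thesis
    by (simp add: Wdef weight_def mult.commute)
qed

lemma W_dy: "((\<lambda>y. W x y) has_real_derivative (- (4*a04*y^3 + 2*a22*x^2*y + 2*a02*y)) * W x y) (at y)"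
proof -
  have dq: "((\<lambda>y. qform a40 a22 a04 a20 a02 x y) has_real_derivative (4*a04*y^3 + 2*a22*x^2*y + 2*a02*y)) (at y)"
    unfolding qform_def by (auto intro!: derivative_eq_intros simp: eval_nat_numeral algebra_simps)
  from DERIV_chain2[OF DERIV_exp DERIV_minus[OF dq]] show ?thesis
    by (simp add: Wdef weight_def mult.commute)
qed

lemma W_cx: "continuous_on UNIV (\<lambda>x. W x y)"
  unfolding Wdef weight_def qform_def by (intro continuous_intros)

lemma W_cy: "continuous_on UNIV (\<lambda>y. W x y)"
  unfolding Wdef weight_def qform_def by (intro continuous_intros)

end


context osysw begin

lemma ibpx:
  assumes Df: "\<And>x y. ((\<lambda>x. f x y) has_real_derivative df x y) (at x)"
    and Dg: "\<And>x y. ((\<lambda>x. g x y) has_real_derivative dg x y) (at x)"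
    and sf: "spanlt G Na f" and sg: "spanlt G Nb g" and sdf: "spanlt G Nc df" and sdg: "spanlt G Nd dg"
  shows "ip W df g + ip W f dg = ip W f (\<lambda>x y. 4*a40 * (x*(x*(x*g x y))) + 2*a22 * (y*(x*(y*g x y))) + 2*a20 * (x*g x y))"
proof -
  define qg where "qg = (\<lambda>x y. 4*a40 * (x*(x*(x*g x y))) + 2*a22 * (y*(x*(y*g x y))) + 2*a20 * (x*g x y))"
  have sqg: "spanlt G (Nb+3) qg" unfolding qg_def
  proof (intro span_add span_scale)
    have s1: "spanlt G (Nb+1) (\<lambda>x y. x * g x y)" by (rule span_mult[OF T1 sg])
    have s2: "spanlt G (Nb+1+1) (\<lambda>x y. x * (x * g x y))" by (rule span_mult[OF T1 s1])
    have s3: "spanlt G (Nb+1+1+1) (\<lambda>x y. x * (x * (x * g x y)))" by (rule span_mult[OF T1 s2])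
    then show "spanlt G (Nb+3) (\<lambda>x y. x * (x * (x * g x y)))" by (simp add: eval_nat_numeral)
    have t1: "spanlt G (Nb+1) (\<lambda>x y. y * g x y)" by (rule span_mult[OF T2 sg])
    have t2: "spanlt G (Nb+1+1) (\<lambda>x y. x * (y * g x y))" by (rule span_mult[OF T1 t1])
    have t3: "spanlt G (Nb+1+1+1) (\<lambda>x y. y * (x * (y * g x y)))" by (rule span_mult[OF T2 t2])
    then show "spanlt G (Nb+3) (\<lambda>x y. y * (x * (y * g x y)))" by (simp add: eval_nat_numeral)
    show "spanlt G (Nb+3) (\<lambda>x y. x * g x y)" by (rule span_mono[OF s1]) simp
  qed
  define dh where "dh = (\<lambda>x y. df x y * g x y * W x y + f x y * dg x y * W x y - f x y * qg x y * W x y)"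
  have der: "((\<lambda>x. f x y * g x y * W x y) has_real_derivative dh x y) (at x)" for x y
  proof -
    have "((\<lambda>x. f x y * g x y * W x y) has_real_derivative
       (df x y * g x y + dg x y * f x y) * W x y + (- (4*a40*x^3 + 2*a22*x*y^2 + 2*a20*x)) * W x y * (f x y * g x y)) (at x)"
      by (rule DERIV_mult[OF DERIV_mult[OF Df Dg] W_dx])
    moreover have "(df x y * g x y + dg x y * f x y) * W x y + (- (4*a40*x^3 + 2*a22*x*y^2 + 2*a20*x)) * W x y * (f x y * g x y) = dh x y"
      unfolding dh_def qg_def by (simp add: algebra_simps eval_nat_numeral power2_eq_square)
    ultimately show ?thesis by simp
  qed
  have cont: "continuous_on UNIV (\<lambda>x. dh x y)" for y
    unfolding dh_def
    by (intro continuous_intros span_contx[OF sf] span_contx[OF sg] span_contx[OF sdf] span_contx[OF sdg] span_contx[OF sqg] W_cx)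
  have i1: "integrable lborel (\<lambda>(x,y). df x y * g x y * W x y)" by (rule int_span[OF sdf sg])
  have i2: "integrable lborel (\<lambda>(x,y). f x y * dg x y * W x y)" by (rule int_span[OF sf sdg])
  have i3: "integrable lborel (\<lambda>(x,y). f x y * qg x y * W x y)" by (rule int_span[OF sf sqg])
  have deq: "(\<lambda>(x,y). dh x y) = (\<lambda>z. (\<lambda>(x,y). df x y * g x y * W x y) z + (\<lambda>(x,y). f x y * dg x y * W x y) z - (\<lambda>(x,y). f x y * qg x y * W x y) z)"
    unfolding dh_def by (auto simp: fun_eq_iff)
  have idh: "integrable lborel (\<lambda>(x,y). dh x y)"
    unfolding deq by (intro Bochner_Integration.integrable_add Bochner_Integration.integrable_diff i1 i2 i3)
  have "integral\<^sup>L lborel (\<lambda>(x,y). dh x y) = 0"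
    by (rule ibp2d[OF der cont int_span[OF sf sg] idh])
  moreover have "integral\<^sup>L lborel (\<lambda>(x,y). dh x y) = ip W df g + ip W f dg - ip W f qg"
    unfolding deq ip_def using i1 i2 i3
    by (simp add: Bochner_Integration.integral_add Bochner_Integration.integral_diff Bochner_Integration.integrable_add)
  ultimately show ?thesis unfolding qg_def by simp
qed


lemma ibpy:
  assumes Df: "\<And>x y. ((\<lambda>y. f x y) has_real_derivative df x y) (at y)"
    and Dg: "\<And>x y. ((\<lambda>y. g x y) has_real_derivative dg x y) (at y)"
    and sf: "spanlt G Na f" and sg: "spanlt G Nb g" and sdf: "spanlt G Nc df" and sdg: "spanlt G Nd dg"
  shows "ip W df g + ip W f dg = ip W f (\<lambda>x y. 4*a04 * (y*(y*(y*g x y))) + 2*a22 * (x*(y*(x*g x y))) + 2*a02 * (y*g x y))"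
proof -
  define qg where "qg = (\<lambda>x y. 4*a04 * (y*(y*(y*g x y))) + 2*a22 * (x*(y*(x*g x y))) + 2*a02 * (y*g x y))"
  have sqg: "spanlt G (Nb+3) qg" unfolding qg_def
  proof (intro span_add span_scale)
    have s1: "spanlt G (Nb+1) (\<lambda>x y. y * g x y)" by (rule span_mult[OF T2 sg])
    have s2: "spanlt G (Nb+1+1) (\<lambda>x y. y * (y * g x y))" by (rule span_mult[OF T2 s1])
    have s3: "spanlt G (Nb+1+1+1) (\<lambda>x y. y * (y * (y * g x y)))" by (rule span_mult[OF T2 s2])
    then show "spanlt G (Nb+3) (\<lambda>x y. y * (y * (y * g x y)))" by (simp add: eval_nat_numeral)
    have t1: "spanlt G (Nb+1) (\<lambda>x y. x * g x y)" by (rule span_mult[OF T1 sg])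
    have t2: "spanlt G (Nb+1+1) (\<lambda>x y. y * (x * g x y))" by (rule span_mult[OF T2 t1])
    have t3: "spanlt G (Nb+1+1+1) (\<lambda>x y. x * (y * (x * g x y)))" by (rule span_mult[OF T1 t2])
    then show "spanlt G (Nb+3) (\<lambda>x y. x * (y * (x * g x y)))" by (simp add: eval_nat_numeral)
    show "spanlt G (Nb+3) (\<lambda>x y. y * g x y)" by (rule span_mono[OF s1]) simp
  qed
  define dh where "dh = (\<lambda>x y. df x y * g x y * W x y + f x y * dg x y * W x y - f x y * qg x y * W x y)"
  have der: "((\<lambda>y. f x y * g x y * W x y) has_real_derivative dh x y) (at y)" for x y
  proof -
    have "((\<lambda>y. f x y * g x y * W x y) has_real_derivative
       (df x y * g x y + dg x y * f x y) * W x y + (- (4*a04*y^3 + 2*a22*x^2*y + 2*a02*y)) * W x y * (f x y * g x y)) (at y)"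
      by (rule DERIV_mult[OF DERIV_mult[OF Df Dg] W_dy])
    moreover have "(df x y * g x y + dg x y * f x y) * W x y + (- (4*a04*y^3 + 2*a22*x^2*y + 2*a02*y)) * W x y * (f x y * g x y) = dh x y"
      unfolding dh_def qg_def by (simp add: algebra_simps eval_nat_numeral power2_eq_square)
    ultimately show ?thesis by simp
  qed
  have cont: "continuous_on UNIV (\<lambda>y. dh x y)" for x
    unfolding dh_def
    by (intro continuous_intros span_conty[OF sf] span_conty[OF sg] span_conty[OF sdf] span_conty[OF sdg] span_conty[OF sqg] W_cy)
  have i1: "integrable lborel (\<lambda>(x,y). df x y * g x y * W x y)" by (rule int_span[OF sdf sg])
  have i2: "integrable lborel (\<lambda>(x,y). f x y * dg x y * W x y)" by (rule int_span[OF sf sdg])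
  have i3: "integrable lborel (\<lambda>(x,y). f x y * qg x y * W x y)" by (rule int_span[OF sf sqg])
  have deq: "(\<lambda>(x,y). dh x y) = (\<lambda>z. (\<lambda>(x,y). df x y * g x y * W x y) z + (\<lambda>(x,y). f x y * dg x y * W x y) z - (\<lambda>(x,y). f x y * qg x y * W x y) z)"
    unfolding dh_def by (auto simp: fun_eq_iff)
  have idh: "integrable lborel (\<lambda>(x,y). dh x y)"
    unfolding deq by (intro Bochner_Integration.integrable_add Bochner_Integration.integrable_diff i1 i2 i3)
  have "integral\<^sup>L lborel (\<lambda>(x,y). dh x y) = 0"
    by (rule ibp2d_y[OF der cont int_span[OF sf sg] idh])
  moreover have "integral\<^sup>L lborel (\<lambda>(x,y). dh x y) = ip W df g + ip W f dg - ip W f qg"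
    unfolding deq ip_def using i1 i2 i3
    by (simp add: Bochner_Integration.integral_add Bochner_Integration.integral_diff Bochner_Integration.integrable_add)
  ultimately show ?thesis unfolding qg_def by simp
qed

end


lemma minv_unique:
  assumes A: "A \<in> carrier_mat n n" and B: "B \<in> carrier_mat n n" and AB: "A * B = 1\<^sub>m n"
  shows "minv A = B"
proof -
  have BA: "B * A = 1\<^sub>m n" by (rule mat_mult_left_right_inverse[OF A B AB])
  have U: "A \<in> Units (ring_mat TYPE(real) n undefined)"
    using A B AB BA unfolding Units_def ring_mat_def by auto
  show ?thesis
  proof (cases "mat_inverse A")
    case None
    from mat_inverse(1)[OF A None, where b=undefined] U show ?thesis by blast
  next
    case (Some C)
    from mat_inverse(2)[OF A Some] have C: "A * C = 1\<^sub>m n" "C * A = 1\<^sub>m n" "C \<in> carrier_mat n n" by auto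
    have "C = C * (A * B)" using C(3) AB by simp
    also have "\<dots> = (C * A) * B" using C(3) A B by simp
    also have "\<dots> = B" using C(2) B by simp
    finally show ?thesis unfolding minv_def Some by simp
  qed
qed

lemma diag_sum: "l < (m::nat) \<Longrightarrow> (\<Sum>l'\<in>{0..<m}. a l' * (if l' = l then b l' else 0)) = a l * (b l :: real)"
proof -
  assume l: "l < m"
  have "(\<Sum>l'\<in>{0..<m}. a l' * (if l' = l then b l' else 0)) = (\<Sum>l'\<in>{0..<m}. if l' = l then a l * b l else 0)"
    by (rule sum.cong) auto
  also have "\<dots> = a l * b l" using l by (subst sum.remove[of "{0..<m}" l]) auto
  finally show ?thesis .
qed

context osys begin

definition Mx :: "nat \<Rightarrow> real mat" where
  "Mx n = mat (n+1) (n+1) (\<lambda>(l,j). ip W (\<lambda>x y. x ^ (n - l) * y ^ l) (P n j))"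

lemma Mx_car[simp]: "Mx n \<in> carrier_mat (n+1) (n+1)" unfolding Mx_def by simp
lemma Mx_dim[simp]: "dim_row (Mx n) = n+1" "dim_col (Mx n) = n+1" unfolding Mx_def by simp_all

lemma ip_lead: assumes "j \<le> n" "i \<le> n"
  shows "ip W (\<lambda>x y. \<Sum>l\<le>n. c l * (x ^ (n - l) * y ^ l)) (P n j) = (\<Sum>l\<le>n. c l * ip W (\<lambda>x y. x ^ (n - l) * y ^ l) (P n j))"
proof (rule lin_ip)
  fix l assume l: "l \<in> {..n}"
  have "spanlt G (n+1) (\<lambda>x y. x ^ (n - l) * y ^ l)" using l by (intro span_mono1) auto
  then show "integrable lborel (\<lambda>(x, y). x ^ (n - l) * y ^ l * P n j x y * W x y)"
    using assms spanP[of j n] by (intro int_span) auto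
qed simp

lemma GM: "G n n * Mx n = 1\<^sub>m (n+1)"
proof (rule eq_matI)
  have Gc: "G n n \<in> carrier_mat (n+1) (n+1)" by (rule Gcar) simp
  fix i j assume "i < dim_row (1\<^sub>m (n+1))" "j < dim_col (1\<^sub>m (n+1))"
  then have i: "i \<le> n" and j: "j \<le> n" by auto
  define low where "low = (\<lambda>x y. P n i x y - (\<Sum>l\<le>n. G n n $$ (i, l) * x ^ (n - l) * y ^ l))"
  have slow: "spanlt G n low" unfolding low_def by (rule P_low)
  have "(G n n * Mx n) $$ (i,j) = (\<Sum>l\<le>n. G n n $$ (i,l) * ip W (\<lambda>x y. x ^ (n - l) * y ^ l) (P n j))"
    using Gc i j by (simp add: scalar_prod_def Mx_def atLeast0LessThan lessThan_Suc_atMost[symmetric])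
  also have "\<dots> = ip W (\<lambda>x y. \<Sum>l\<le>n. G n n $$ (i,l) * (x ^ (n - l) * y ^ l)) (P n j)"
    by (rule ip_lead[symmetric]) (use i j in auto)
  also have "\<dots> = ip W (\<lambda>x y. P n i x y + (-1) * low x y) (P n j)"
    unfolding low_def by (simp add: mult.assoc)
  also have "\<dots> = ip W (P n i) (P n j) + ip W (\<lambda>x y. (-1) * low x y) (P n j)"
  proof (rule ip_add1)
    have si: "spanlt G (Suc n) (P n i)" and sj: "spanlt G (Suc n) (P n j)" using i j spanP by auto
    show "integrable lborel (\<lambda>(x, y). P n i x y * P n j x y * W x y)" by (rule int_span[OF si sj])
    show "integrable lborel (\<lambda>(x, y). (-1) * low x y * P n j x y * W x y)" by (rule int_span[OF span_scale[OF slow] sj])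
  qed
  also have "\<dots> = ip W (P n i) (P n j) + (-1) * ip W low (P n j)" by (simp only: ip_scale1)
  also have "\<dots> = (if i = j then 1 else 0)" using orth[OF slow j] ipP[OF i j] by simp
  finally show "(G n n * Mx n) $$ (i,j) = 1\<^sub>m (n+1) $$ (i,j)" using i j by simp
qed (use Gcar[of n n] in \<open>auto simp: Mx_def\<close>)

lemma minv_G: "minv (G n n) = Mx n"
  by (rule minv_unique[OF Gcar Mx_car GM]) simp

end


context osysw begin

lemma RHS_x_entry: assumes i: "i \<le> n" and j: "j \<le> n"
  shows "(A1 n * Gm (n+2) (n+1) (n+1) (\<lambda>j x y. 4*a40 * (x*(x*(x*P n j x y))) + 2*a22 * (y*(x*(y*P n j x y))) + 2*a20 * (x*P n j x y))) $$ (i,j)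
    = (\<Sum>l\<le>n. (G n n $$ (i,l) * real (n+1-l)) * Mx n $$ (l,j))"
proof -
  let ?Q = "\<lambda>j x y. 4*a40 * (x*(x*(x*P n j x y))) + 2*a22 * (y*(x*(y*P n j x y))) + 2*a20 * (x*P n j x y)"
  have Ac: "A1 n \<in> carrier_mat (n+1) (n+2)" by (rule three_term_car[OF T1])
  have sj: "spanlt G (Suc n) (P n j)" using j spanP by auto
  have "(A1 n * Gm (n+2) (n+1) (n+1) ?Q) $$ (i,j) = (\<Sum>k\<le>n+1. A1 n $$ (i,k) * ip W (P (n+1) k) (?Q j))"
    using Ac i j by (simp add: scalar_prod_def atLeast0LessThan lessThan_Suc_atMost[symmetric])
  also have "\<dots> = (\<Sum>k\<le>n+1. A1 n $$ (i,k) * ip W (dPx G (n+1) k) (P n j))"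
  proof (rule sum.cong[OF refl])
    fix k assume k: "k \<in> {..n+1}"
    have "ip W (dPx G (n+1) k) (P n j) + ip W (P (n+1) k) (dPx G n j) = ip W (P (n+1) k) (?Q j)"
      by (rule ibpx[OF D_x D_x span_P[of k "n+1" "n+2"] sj span_dPx span_dPx]) (use k in auto)
    moreover have "ip W (P (n+1) k) (dPx G n j) = 0"
      by (rule orth'[OF span_mono[OF span_dPx]]) (use k in auto)
    ultimately show "A1 n $$ (i,k) * ip W (P (n+1) k) (?Q j) = A1 n $$ (i,k) * ip W (dPx G (n+1) k) (P n j)" by simp
  qed
  also have "\<dots> = ip W (\<lambda>x y. \<Sum>k\<le>n+1. A1 n $$ (i,k) * dPx G (n+1) k x y) (P n j)"
    by (rule lin_ip[symmetric]) (auto intro!: int_span[OF span_dPx sj])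
  also have "\<dots> = (\<Sum>l\<le>n. (G n n $$ (i,l) * real (n+1-l)) * Mx n $$ (l,j))"
  proof -
    define E where "E = (\<lambda>x y. \<Sum>l\<le>n. (G n n $$ (i,l) * real (n+1-l)) * (x ^ (n - l) * y ^ l))"
    define S where "S = (\<lambda>x y. \<Sum>k\<le>n+1. A1 n $$ (i,k) * dPx G (n+1) k x y)"
    define R where "R = (\<lambda>x y. S x y - E x y)"
    have sE: "spanlt G (n+1) E" unfolding E_def
      by (intro span_sum span_scale span_mono1 finite_atMost) auto
    have Esplit: "E x y = (\<Sum>l\<le>n. G n n $$ (i, l) * x ^ (n - l) * y ^ l) + (\<Sum>l\<le>n. G n n $$ (i, l) * real (n - l) * x ^ (n - l) * y ^ l)" for x y
      unfolding E_def sum.distrib[symmetric]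
      by (rule sum.cong[OF refl]) (auto simp: Suc_diff_le algebra_simps)
    have "spanlt G n (\<lambda>x y. (P n i x y - (\<Sum>l\<le>n. G n n $$ (i, l) * x ^ (n - l) * y ^ l))
       + (x * dPx G n i x y - (\<Sum>l\<le>n. G n n $$ (i, l) * real (n - l) * x ^ (n - l) * y ^ l))
       + (-1) * (\<Sum>l<n. prevA A1 n $$ (l,i) * dPx G (n-1) l x y))"
      by (intro span_add P_low xdP_low span_scale span_sum finite_lessThan span_mono[OF span_dPx]) auto
    then have sR: "spanlt G n R"
    proof (rule span_eq)
      fix x y show "R x y = (P n i x y - (\<Sum>l\<le>n. G n n $$ (i, l) * x ^ (n - l) * y ^ l))
       + (x * dPx G n i x y - (\<Sum>l\<le>n. G n n $$ (i, l) * real (n - l) * x ^ (n - l) * y ^ l))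
       + (-1) * (\<Sum>l<n. prevA A1 n $$ (l,i) * dPx G (n-1) l x y)"
        unfolding R_def S_def Esplit dthree_x[OF i] by simp
    qed
    have "ip W S (P n j) = ip W (\<lambda>x y. E x y + R x y) (P n j)" unfolding R_def by simp
    also have "\<dots> = ip W E (P n j) + ip W R (P n j)"
      by (rule ip_add1) (rule int_span[OF sE sj], rule int_span[OF sR sj])
    also have "ip W R (P n j) = 0" by (rule orth[OF sR j])
    also have "ip W E (P n j) = (\<Sum>l\<le>n. (G n n $$ (i,l) * real (n+1-l)) * ip W (\<lambda>x y. x ^ (n - l) * y ^ l) (P n j))"
      unfolding E_def by (rule ip_lead[OF j i])
    also have "\<dots> = (\<Sum>l\<le>n. (G n n $$ (i,l) * real (n+1-l)) * Mx n $$ (l,j))"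
      by (rule sum.cong[OF refl]) (use j in \<open>auto simp: Mx_def\<close>)
    finally show ?thesis unfolding S_def by simp
  qed
  finally show ?thesis .
qed


lemma RHS_y_entry: assumes i: "i \<le> n" and j: "j \<le> n"
  shows "(A2 n * Gm (n+2) (n+1) (n+1) (\<lambda>j x y. 4*a04 * (y*(y*(y*P n j x y))) + 2*a22 * (x*(y*(x*P n j x y))) + 2*a02 * (y*P n j x y))) $$ (i,j)
    = (\<Sum>l\<le>n. (G n n $$ (i,l) * real (l+1)) * Mx n $$ (l,j))"
proof -
  let ?Q = "\<lambda>j x y. 4*a04 * (y*(y*(y*P n j x y))) + 2*a22 * (x*(y*(x*P n j x y))) + 2*a02 * (y*P n j x y)"
  have Ac: "A2 n \<in> carrier_mat (n+1) (n+2)" by (rule three_term_car[OF T2])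
  have sj: "spanlt G (Suc n) (P n j)" using j spanP by auto
  have "(A2 n * Gm (n+2) (n+1) (n+1) ?Q) $$ (i,j) = (\<Sum>k\<le>n+1. A2 n $$ (i,k) * ip W (P (n+1) k) (?Q j))"
    using Ac i j by (simp add: scalar_prod_def atLeast0LessThan lessThan_Suc_atMost[symmetric])
  also have "\<dots> = (\<Sum>k\<le>n+1. A2 n $$ (i,k) * ip W (dPy G (n+1) k) (P n j))"
  proof (rule sum.cong[OF refl])
    fix k assume k: "k \<in> {..n+1}"
    have "ip W (dPy G (n+1) k) (P n j) + ip W (P (n+1) k) (dPy G n j) = ip W (P (n+1) k) (?Q j)"
      by (rule ibpy[OF D_y D_y span_P[of k "n+1" "n+2"] sj span_dPy span_dPy]) (use k in auto)
    moreover have "ip W (P (n+1) k) (dPy G n j) = 0"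
      by (rule orth'[OF span_mono[OF span_dPy]]) (use k in auto)
    ultimately show "A2 n $$ (i,k) * ip W (P (n+1) k) (?Q j) = A2 n $$ (i,k) * ip W (dPy G (n+1) k) (P n j)" by simp
  qed
  also have "\<dots> = ip W (\<lambda>x y. \<Sum>k\<le>n+1. A2 n $$ (i,k) * dPy G (n+1) k x y) (P n j)"
    by (rule lin_ip[symmetric]) (auto intro!: int_span[OF span_dPy sj])
  also have "\<dots> = (\<Sum>l\<le>n. (G n n $$ (i,l) * real (l+1)) * Mx n $$ (l,j))"
  proof -
    define E where "E = (\<lambda>x y. \<Sum>l\<le>n. (G n n $$ (i,l) * real (l+1)) * (x ^ (n - l) * y ^ l))"
    define S where "S = (\<lambda>x y. \<Sum>k\<le>n+1. A2 n $$ (i,k) * dPy G (n+1) k x y)"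
    define R where "R = (\<lambda>x y. S x y - E x y)"
    have sE: "spanlt G (n+1) E" unfolding E_def
      by (intro span_sum span_scale span_mono1 finite_atMost) auto
    have Esplit: "E x y = (\<Sum>l\<le>n. G n n $$ (i, l) * x ^ (n - l) * y ^ l) + (\<Sum>l\<le>n. G n n $$ (i, l) * real l * x ^ (n - l) * y ^ l)" for x y
      unfolding E_def sum.distrib[symmetric]
      by (rule sum.cong[OF refl]) (auto simp: Suc_diff_le algebra_simps)
    have "spanlt G n (\<lambda>x y. (P n i x y - (\<Sum>l\<le>n. G n n $$ (i, l) * x ^ (n - l) * y ^ l))
       + (y * dPy G n i x y - (\<Sum>l\<le>n. G n n $$ (i, l) * real l * x ^ (n - l) * y ^ l))
       + (-1) * (\<Sum>l<n. prevA A2 n $$ (l,i) * dPy G (n-1) l x y))"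
      by (intro span_add P_low ydP_low span_scale span_sum finite_lessThan span_mono[OF span_dPy]) auto
    then have sR: "spanlt G n R"
    proof (rule span_eq)
      fix x y show "R x y = (P n i x y - (\<Sum>l\<le>n. G n n $$ (i, l) * x ^ (n - l) * y ^ l))
       + (y * dPy G n i x y - (\<Sum>l\<le>n. G n n $$ (i, l) * real l * x ^ (n - l) * y ^ l))
       + (-1) * (\<Sum>l<n. prevA A2 n $$ (l,i) * dPy G (n-1) l x y)"
        unfolding R_def S_def Esplit dthree_y[OF i] by simp
    qed
    have "ip W S (P n j) = ip W (\<lambda>x y. E x y + R x y) (P n j)" unfolding R_def by simp
    also have "\<dots> = ip W E (P n j) + ip W R (P n j)"
      by (rule ip_add1) (rule int_span[OF sE sj], rule int_span[OF sR sj])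
    also have "ip W R (P n j) = 0" by (rule orth[OF sR j])
    also have "ip W E (P n j) = (\<Sum>l\<le>n. (G n n $$ (i,l) * real (l+1)) * ip W (\<lambda>x y. x ^ (n - l) * y ^ l) (P n j))"
      unfolding E_def by (rule ip_lead[OF j i])
    also have "\<dots> = (\<Sum>l\<le>n. (G n n $$ (i,l) * real (l+1)) * Mx n $$ (l,j))"
      by (rule sum.cong[OF refl]) (use j in \<open>auto simp: Mx_def\<close>)
    finally show ?thesis unfolding S_def by simp
  qed
  finally show ?thesis .
qed


lemma GN1: assumes "i < Suc n" "l < Suc n" shows "(G n n * N1 (Suc n)) $$ (i,l) = G n n $$ (i,l) * real (Suc n-l)"
proof -
  have Gc: "G n n \<in> carrier_mat (n+1) (n+1)" by (rule Gcar) simp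
  have "(G n n * N1 (n+1)) $$ (i,l) = row (G n n) i \<bullet> col (N1 (n+1)) l"
    using assms Gc by (simp add: N1_def)
  also have "\<dots> = (\<Sum>l'\<in>{0..<n+1}. G n n $$ (i,l') * (if l' = l then real (n+1-l') else 0))"
    unfolding scalar_prod_def by (intro sum.cong) (use assms Gc in \<open>auto simp: N1_def\<close>)
  also have "\<dots> = G n n $$ (i,l) * real (n+1-l)" by (rule diag_sum) (use assms in auto)
  finally show ?thesis by simp
qed

lemma GN2: assumes "i < Suc n" "l < Suc n" shows "(G n n * N2 (Suc n)) $$ (i,l) = G n n $$ (i,l) * real (Suc l)"
proof -
  have Gc: "G n n \<in> carrier_mat (n+1) (n+1)" by (rule Gcar) simp
  have "(G n n * N2 (n+1)) $$ (i,l) = row (G n n) i \<bullet> col (N2 (n+1)) l"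
    using assms Gc by (simp add: N2_def)
  also have "\<dots> = (\<Sum>l'\<in>{0..<n+1}. G n n $$ (i,l') * (if l' = l then real (l'+1) else 0))"
    unfolding scalar_prod_def by (intro sum.cong) (use assms Gc in \<open>auto simp: N2_def\<close>)
  also have "\<dots> = G n n $$ (i,l) * real (l+1)" by (rule diag_sum) (use assms in auto)
  finally show ?thesis by simp
qed

lemma RHS_x: "A1 n * Gm (n+2) (n+1) (n+1) (\<lambda>j x y. 4*a40 * (x*(x*(x*P n j x y))) + 2*a22 * (y*(x*(y*P n j x y))) + 2*a20 * (x*P n j x y))
   = G n n * N1 (n+1) * minv (G n n)"
proof (rule eq_matI)
  have Gc: "G n n \<in> carrier_mat (n+1) (n+1)" by (rule Gcar) simp
  have Ac: "A1 n \<in> carrier_mat (n+1) (n+2)" by (rule three_term_car[OF T1])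
  have Nc: "N1 (n+1) \<in> carrier_mat (n+1) (n+1)" by (simp add: N1_def)
  show "dim_row (A1 n * Gm (n+2) (n+1) (n+1) (\<lambda>j x y. 4*a40 * (x*(x*(x*P n j x y))) + 2*a22 * (y*(x*(y*P n j x y))) + 2*a20 * (x*P n j x y))) = dim_row (G n n * N1 (n+1) * minv (G n n))"
    using Gc Ac by simp
  show "dim_col (A1 n * Gm (n+2) (n+1) (n+1) (\<lambda>j x y. 4*a40 * (x*(x*(x*P n j x y))) + 2*a22 * (y*(x*(y*P n j x y))) + 2*a20 * (x*P n j x y))) = dim_col (G n n * N1 (n+1) * minv (G n n))"
    using Gc Ac by (simp add: minv_G)
  fix i j assume "i < dim_row (G n n * N1 (n+1) * minv (G n n))" "j < dim_col (G n n * N1 (n+1) * minv (G n n))"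
  then have i: "i < n+1" and j: "j < n+1" using Gc by (auto simp: minv_G)
  have "(G n n * N1 (n+1) * minv (G n n)) $$ (i,j) = (\<Sum>l\<in>{0..<n+1}. (G n n * N1 (n+1)) $$ (i,l) * Mx n $$ (l,j))"
    using i j Gc Nc by (simp add: minv_G scalar_prod_def)
  also have "\<dots> = (\<Sum>l\<in>{0..<n+1}. (G n n $$ (i,l) * real (n+1-l)) * Mx n $$ (l,j))"
    by (rule sum.cong[OF refl]) (use i in \<open>auto simp: GN1\<close>)
  also have "\<dots> = (\<Sum>l\<le>n. (G n n $$ (i,l) * real (n+1-l)) * Mx n $$ (l,j))"
    by (simp only: atLeast0LessThan lessThan_Suc_atMost Suc_eq_plus1[symmetric])
  finally show "(A1 n * Gm (n+2) (n+1) (n+1) (\<lambda>j x y. 4*a40 * (x*(x*(x*P n j x y))) + 2*a22 * (y*(x*(y*P n j x y))) + 2*a20 * (x*P n j x y))) $$ (i,j) = (G n n * N1 (n+1) * minv (G n n)) $$ (i,j)"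
    using RHS_x_entry[of i n j] i j by simp
qed


lemma RHS_y: "A2 n * Gm (n+2) (n+1) (n+1) (\<lambda>j x y. 4*a04 * (y*(y*(y*P n j x y))) + 2*a22 * (x*(y*(x*P n j x y))) + 2*a02 * (y*P n j x y))
   = G n n * N2 (n+1) * minv (G n n)"
proof (rule eq_matI)
  have Gc: "G n n \<in> carrier_mat (n+1) (n+1)" by (rule Gcar) simp
  have Ac: "A2 n \<in> carrier_mat (n+1) (n+2)" by (rule three_term_car[OF T2])
  have Nc: "N2 (n+1) \<in> carrier_mat (n+1) (n+1)" by (simp add: N2_def)
  show "dim_row (A2 n * Gm (n+2) (n+1) (n+1) (\<lambda>j x y. 4*a04 * (y*(y*(y*P n j x y))) + 2*a22 * (x*(y*(x*P n j x y))) + 2*a02 * (y*P n j x y))) = dim_row (G n n * N2 (n+1) * minv (G n n))"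
    using Gc Ac by simp
  show "dim_col (A2 n * Gm (n+2) (n+1) (n+1) (\<lambda>j x y. 4*a04 * (y*(y*(y*P n j x y))) + 2*a22 * (x*(y*(x*P n j x y))) + 2*a02 * (y*P n j x y))) = dim_col (G n n * N2 (n+1) * minv (G n n))"
    using Gc Ac by (simp add: minv_G)
  fix i j assume "i < dim_row (G n n * N2 (n+1) * minv (G n n))" "j < dim_col (G n n * N2 (n+1) * minv (G n n))"
  then have i: "i < n+1" and j: "j < n+1" using Gc by (auto simp: minv_G)
  have "(G n n * N2 (n+1) * minv (G n n)) $$ (i,j) = (\<Sum>l\<in>{0..<n+1}. (G n n * N2 (n+1)) $$ (i,l) * Mx n $$ (l,j))"
    using i j Gc Nc by (simp add: minv_G scalar_prod_def)
  also have "\<dots> = (\<Sum>l\<in>{0..<n+1}. (G n n $$ (i,l) * real (l+1)) * Mx n $$ (l,j))"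
    by (rule sum.cong[OF refl]) (use i in \<open>auto simp: GN2\<close>)
  also have "\<dots> = (\<Sum>l\<le>n. (G n n $$ (i,l) * real (l+1)) * Mx n $$ (l,j))"
    by (simp only: atLeast0LessThan lessThan_Suc_atMost Suc_eq_plus1[symmetric])
  finally show "(A2 n * Gm (n+2) (n+1) (n+1) (\<lambda>j x y. 4*a04 * (y*(y*(y*P n j x y))) + 2*a22 * (x*(y*(x*P n j x y))) + 2*a02 * (y*P n j x y))) $$ (i,j) = (G n n * N2 (n+1) * minv (G n n)) $$ (i,j)"
    using RHS_y_entry[of i n j] i j by simp
qed

end


context osysw begin

lemma LHS_x: "(4 * a40) \<cdot>\<^sub>m (A1 n * ((A1 (n+1) * transpose_mat (A1 (n+1))) * transpose_mat (A1 n)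
        + transpose_mat (A1 n) * (A1 n * transpose_mat (A1 n)
                                  + transpose_mat (prevA A1 n) * prevA A1 n)))
    + (2 * a22) \<cdot>\<^sub>m (A1 n * ((A2 (n+1) * transpose_mat (A1 (n+1))) * transpose_mat (A2 n)
        + transpose_mat (A2 n) * (A1 n * transpose_mat (A2 n)
                                  + transpose_mat (prevA A1 n) * prevA A2 n)))
    + (2 * a20) \<cdot>\<^sub>m (A1 n * transpose_mat (A1 n))
  = A1 n * Gm (n+2) (n+1) (n+1) (\<lambda>j x y. 4*a40 * (x*(x*(x*P n j x y))) + 2*a22 * (y*(x*(y*P n j x y))) + 2*a20 * (x*P n j x y))"
proof -
  have A1c: "A1 n \<in> carrier_mat (n+1) (n+2)" "A1 (n+1) \<in> carrier_mat (n+2) (n+3)"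
    using three_term_car[OF T1, of n] three_term_car[OF T1, of "n+1"] by (auto simp: eval_nat_numeral)
  have A2c: "A2 n \<in> carrier_mat (n+1) (n+2)" "A2 (n+1) \<in> carrier_mat (n+2) (n+3)"
    using three_term_car[OF T2, of n] three_term_car[OF T2, of "n+1"] by (auto simp: eval_nat_numeral)
  have P1c: "prevA A1 n \<in> carrier_mat n (n+1)" by (rule three_term_prev_car[OF T1])
  have P2c: "prevA A2 n \<in> carrier_mat n (n+1)" by (rule three_term_prev_car[OF T2])
  define X where "X = A1 (n+1) * (transpose_mat (A1 (n+1)) * transpose_mat (A1 n))
       + transpose_mat (A1 n) * (A1 n * transpose_mat (A1 n) + transpose_mat (prevA A1 n) * prevA A1 n)"
  define Y where "Y = A2 (n+1) * (transpose_mat (A1 (n+1)) * transpose_mat (A2 n))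
       + transpose_mat (A2 n) * (A1 n * transpose_mat (A2 n) + transpose_mat (prevA A1 n) * prevA A2 n)"
  have Xc: "X \<in> carrier_mat (n+2) (n+1)" unfolding X_def using A1c P1c by (intro add_carrier_mat mult_carrier_mat) auto
  have Yc: "Y \<in> carrier_mat (n+2) (n+1)" unfolding Y_def using A1c A2c P1c P2c by (intro add_carrier_mat mult_carrier_mat) auto
  have GX: "Gm (n+2) (n+1) (n+1) (\<lambda>j x y. x*(x*(x*P n j x y))) = X"
    unfolding X_def using L_top[OF T1 T1 T1, of n] by simp
  have GY: "Gm (n+2) (n+1) (n+1) (\<lambda>j x y. y*(x*(y*P n j x y))) = Y"
    unfolding Y_def using L_top[OF T2 T1 T2, of n] by simp
  have GZ: "Gm (n+2) (n+1) (n+1) (\<lambda>j x y. x*P n j x y) = transpose_mat (A1 n)"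
    using L_a[OF T1, of n] by simp
  have sp1: "spanlt G (n+4) (\<lambda>x y. x*(x*(x*P n j x y)))" if "j < n+1" for j
  proof -
    have "spanlt G (Suc n) (P n j)" using that by (intro spanP) simp
    then have "spanlt G (Suc n+1+1+1) (\<lambda>x y. x*(x*(x*P n j x y)))" by (intro span_mult[OF T1])
    then show ?thesis by (simp add: eval_nat_numeral)
  qed
  have sp2: "spanlt G (n+4) (\<lambda>x y. y*(x*(y*P n j x y)))" if "j < n+1" for j
  proof -
    have "spanlt G (Suc n) (P n j)" using that by (intro spanP) simp
    then have "spanlt G (Suc n+1+1+1) (\<lambda>x y. y*(x*(y*P n j x y)))" by (intro span_mult[OF T2] span_mult[OF T1])
    then show ?thesis by (simp add: eval_nat_numeral)
  qed
  have sp3: "spanlt G (n+4) (\<lambda>x y. x*P n j x y)" if "j < n+1" for j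
  proof -
    have "spanlt G (Suc n) (P n j)" using that by (intro spanP) simp
    then have "spanlt G (Suc n+1) (\<lambda>x y. x*P n j x y)" by (intro span_mult[OF T1])
    then show ?thesis by (rule span_mono) simp
  qed
  have GL: "Gm (n+2) (n+1) (n+1) (\<lambda>j x y. 4*a40 * (x*(x*(x*P n j x y))) + 2*a22 * (y*(x*(y*P n j x y))) + 2*a20 * (x*P n j x y))
     = (4*a40) \<cdot>\<^sub>m X + (2*a22) \<cdot>\<^sub>m Y + (2*a20) \<cdot>\<^sub>m transpose_mat (A1 n)"
    unfolding GX[symmetric] GY[symmetric] GZ[symmetric]
    by (rule Gm_lin[where N="n+4"]) (use sp1 sp2 sp3 in auto)
  then have "A1 n * Gm (n+2) (n+1) (n+1) (\<lambda>j x y. 4*a40 * (x*(x*(x*P n j x y))) + 2*a22 * (y*(x*(y*P n j x y))) + 2*a20 * (x*P n j x y))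
     = (4*a40) \<cdot>\<^sub>m (A1 n * X) + (2*a22) \<cdot>\<^sub>m (A1 n * Y) + (2*a20) \<cdot>\<^sub>m (A1 n * transpose_mat (A1 n))"
  proof -
    have Tc: "transpose_mat (A1 n) \<in> carrier_mat (n+2) (n+1)" using A1c by simp
    have c1: "(4*a40) \<cdot>\<^sub>m X \<in> carrier_mat (n+2) (n+1)" "(2*a22) \<cdot>\<^sub>m Y \<in> carrier_mat (n+2) (n+1)"
      "(2*a20) \<cdot>\<^sub>m transpose_mat (A1 n) \<in> carrier_mat (n+2) (n+1)" using Xc Yc Tc by auto
    have "A1 n * ((4*a40) \<cdot>\<^sub>m X + (2*a22) \<cdot>\<^sub>m Y + (2*a20) \<cdot>\<^sub>m transpose_mat (A1 n))
      = A1 n * ((4*a40) \<cdot>\<^sub>m X + (2*a22) \<cdot>\<^sub>m Y) + A1 n * ((2*a20) \<cdot>\<^sub>m transpose_mat (A1 n))"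
      by (rule mult_add_distrib_mat[OF A1c(1) add_carrier_mat[OF c1(2)] c1(3)])
    also have "A1 n * ((4*a40) \<cdot>\<^sub>m X + (2*a22) \<cdot>\<^sub>m Y) = A1 n * ((4*a40) \<cdot>\<^sub>m X) + A1 n * ((2*a22) \<cdot>\<^sub>m Y)"
      by (rule mult_add_distrib_mat[OF A1c(1) c1(1,2)])
    also have "A1 n * ((4*a40) \<cdot>\<^sub>m X) = (4*a40) \<cdot>\<^sub>m (A1 n * X)" by (rule mult_smult_distrib[OF A1c(1) Xc])
    also have "A1 n * ((2*a22) \<cdot>\<^sub>m Y) = (2*a22) \<cdot>\<^sub>m (A1 n * Y)" by (rule mult_smult_distrib[OF A1c(1) Yc])
    also have "A1 n * ((2*a20) \<cdot>\<^sub>m transpose_mat (A1 n)) = (2*a20) \<cdot>\<^sub>m (A1 n * transpose_mat (A1 n))" by (rule mult_smult_distrib[OF A1c(1) Tc])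
    finally show ?thesis using GL by simp
  qed
  moreover have "X = (A1 (n+1) * transpose_mat (A1 (n+1))) * transpose_mat (A1 n)
        + transpose_mat (A1 n) * (A1 n * transpose_mat (A1 n) + transpose_mat (prevA A1 n) * prevA A1 n)"
    unfolding X_def using A1c by (subst assoc_mult_mat) auto
  moreover have "Y = (A2 (n+1) * transpose_mat (A1 (n+1))) * transpose_mat (A2 n)
        + transpose_mat (A2 n) * (A1 n * transpose_mat (A2 n) + transpose_mat (prevA A1 n) * prevA A2 n)"
    unfolding Y_def using A1c A2c by (subst assoc_mult_mat) auto
  ultimately show ?thesis by simp
qed


lemma LHS_y: "(4 * a04) \<cdot>\<^sub>m (A2 n * ((A2 (n+1) * transpose_mat (A2 (n+1))) * transpose_mat (A2 n)
        + transpose_mat (A2 n) * (A2 n * transpose_mat (A2 n)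
                                  + transpose_mat (prevA A2 n) * prevA A2 n)))
    + (2 * a22) \<cdot>\<^sub>m (A2 n * ((A1 (n+1) * transpose_mat (A2 (n+1))) * transpose_mat (A1 n)
        + transpose_mat (A1 n) * (A2 n * transpose_mat (A1 n)
                                  + transpose_mat (prevA A2 n) * prevA A1 n)))
    + (2 * a02) \<cdot>\<^sub>m (A2 n * transpose_mat (A2 n))
  = A2 n * Gm (n+2) (n+1) (n+1) (\<lambda>j x y. 4*a04 * (y*(y*(y*P n j x y))) + 2*a22 * (x*(y*(x*P n j x y))) + 2*a02 * (y*P n j x y))"
proof -
  have A2c: "A2 n \<in> carrier_mat (n+1) (n+2)" "A2 (n+1) \<in> carrier_mat (n+2) (n+3)"
    using three_term_car[OF T2, of n] three_term_car[OF T2, of "n+1"] by (auto simp: eval_nat_numeral)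
  have A1c: "A1 n \<in> carrier_mat (n+1) (n+2)" "A1 (n+1) \<in> carrier_mat (n+2) (n+3)"
    using three_term_car[OF T1, of n] three_term_car[OF T1, of "n+1"] by (auto simp: eval_nat_numeral)
  have P1c: "prevA A2 n \<in> carrier_mat n (n+1)" by (rule three_term_prev_car[OF T2])
  have P2c: "prevA A1 n \<in> carrier_mat n (n+1)" by (rule three_term_prev_car[OF T1])
  define X where "X = A2 (n+1) * (transpose_mat (A2 (n+1)) * transpose_mat (A2 n))
       + transpose_mat (A2 n) * (A2 n * transpose_mat (A2 n) + transpose_mat (prevA A2 n) * prevA A2 n)"
  define Y where "Y = A1 (n+1) * (transpose_mat (A2 (n+1)) * transpose_mat (A1 n))
       + transpose_mat (A1 n) * (A2 n * transpose_mat (A1 n) + transpose_mat (prevA A2 n) * prevA A1 n)"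
  have Xc: "X \<in> carrier_mat (n+2) (n+1)" unfolding X_def using A2c P1c by (intro add_carrier_mat mult_carrier_mat) auto
  have Yc: "Y \<in> carrier_mat (n+2) (n+1)" unfolding Y_def using A2c A1c P1c P2c by (intro add_carrier_mat mult_carrier_mat) auto
  have GX: "Gm (n+2) (n+1) (n+1) (\<lambda>j x y. y*(y*(y*P n j x y))) = X"
    unfolding X_def using L_top[OF T2 T2 T2, of n] by simp
  have GY: "Gm (n+2) (n+1) (n+1) (\<lambda>j x y. x*(y*(x*P n j x y))) = Y"
    unfolding Y_def using L_top[OF T1 T2 T1, of n] by simp
  have GZ: "Gm (n+2) (n+1) (n+1) (\<lambda>j x y. y*P n j x y) = transpose_mat (A2 n)"
    using L_a[OF T2, of n] by simp
  have sp1: "spanlt G (n+4) (\<lambda>x y. y*(y*(y*P n j x y)))" if "j < n+1" for j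
  proof -
    have "spanlt G (Suc n) (P n j)" using that by (intro spanP) simp
    then have "spanlt G (Suc n+1+1+1) (\<lambda>x y. y*(y*(y*P n j x y)))" by (intro span_mult[OF T2])
    then show ?thesis by (simp add: eval_nat_numeral)
  qed
  have sp2: "spanlt G (n+4) (\<lambda>x y. x*(y*(x*P n j x y)))" if "j < n+1" for j
  proof -
    have "spanlt G (Suc n) (P n j)" using that by (intro spanP) simp
    then have "spanlt G (Suc n+1+1+1) (\<lambda>x y. x*(y*(x*P n j x y)))" by (intro span_mult[OF T1] span_mult[OF T2])
    then show ?thesis by (simp add: eval_nat_numeral)
  qed
  have sp3: "spanlt G (n+4) (\<lambda>x y. y*P n j x y)" if "j < n+1" for j
  proof -
    have "spanlt G (Suc n) (P n j)" using that by (intro spanP) simp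
    then have "spanlt G (Suc n+1) (\<lambda>x y. y*P n j x y)" by (intro span_mult[OF T2])
    then show ?thesis by (rule span_mono) simp
  qed
  have GL: "Gm (n+2) (n+1) (n+1) (\<lambda>j x y. 4*a04 * (y*(y*(y*P n j x y))) + 2*a22 * (x*(y*(x*P n j x y))) + 2*a02 * (y*P n j x y))
     = (4*a04) \<cdot>\<^sub>m X + (2*a22) \<cdot>\<^sub>m Y + (2*a02) \<cdot>\<^sub>m transpose_mat (A2 n)"
    unfolding GX[symmetric] GY[symmetric] GZ[symmetric]
    by (rule Gm_lin[where N="n+4"]) (use sp1 sp2 sp3 in auto)
  then have "A2 n * Gm (n+2) (n+1) (n+1) (\<lambda>j x y. 4*a04 * (y*(y*(y*P n j x y))) + 2*a22 * (x*(y*(x*P n j x y))) + 2*a02 * (y*P n j x y))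
     = (4*a04) \<cdot>\<^sub>m (A2 n * X) + (2*a22) \<cdot>\<^sub>m (A2 n * Y) + (2*a02) \<cdot>\<^sub>m (A2 n * transpose_mat (A2 n))"
  proof -
    have Tc: "transpose_mat (A2 n) \<in> carrier_mat (n+2) (n+1)" using A2c by simp
    have c1: "(4*a04) \<cdot>\<^sub>m X \<in> carrier_mat (n+2) (n+1)" "(2*a22) \<cdot>\<^sub>m Y \<in> carrier_mat (n+2) (n+1)"
      "(2*a02) \<cdot>\<^sub>m transpose_mat (A2 n) \<in> carrier_mat (n+2) (n+1)" using Xc Yc Tc by auto
    have "A2 n * ((4*a04) \<cdot>\<^sub>m X + (2*a22) \<cdot>\<^sub>m Y + (2*a02) \<cdot>\<^sub>m transpose_mat (A2 n))
      = A2 n * ((4*a04) \<cdot>\<^sub>m X + (2*a22) \<cdot>\<^sub>m Y) + A2 n * ((2*a02) \<cdot>\<^sub>m transpose_mat (A2 n))"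
      by (rule mult_add_distrib_mat[OF A2c(1) add_carrier_mat[OF c1(2)] c1(3)])
    also have "A2 n * ((4*a04) \<cdot>\<^sub>m X + (2*a22) \<cdot>\<^sub>m Y) = A2 n * ((4*a04) \<cdot>\<^sub>m X) + A2 n * ((2*a22) \<cdot>\<^sub>m Y)"
      by (rule mult_add_distrib_mat[OF A2c(1) c1(1,2)])
    also have "A2 n * ((4*a04) \<cdot>\<^sub>m X) = (4*a04) \<cdot>\<^sub>m (A2 n * X)" by (rule mult_smult_distrib[OF A2c(1) Xc])
    also have "A2 n * ((2*a22) \<cdot>\<^sub>m Y) = (2*a22) \<cdot>\<^sub>m (A2 n * Y)" by (rule mult_smult_distrib[OF A2c(1) Yc])
    also have "A2 n * ((2*a02) \<cdot>\<^sub>m transpose_mat (A2 n)) = (2*a02) \<cdot>\<^sub>m (A2 n * transpose_mat (A2 n))" by (rule mult_smult_distrib[OF A2c(1) Tc])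
    finally show ?thesis using GL by simp
  qed
  moreover have "X = (A2 (n+1) * transpose_mat (A2 (n+1))) * transpose_mat (A2 n)
        + transpose_mat (A2 n) * (A2 n * transpose_mat (A2 n) + transpose_mat (prevA A2 n) * prevA A2 n)"
    unfolding X_def using A2c by (subst assoc_mult_mat) auto
  moreover have "Y = (A1 (n+1) * transpose_mat (A2 (n+1))) * transpose_mat (A1 n)
        + transpose_mat (A1 n) * (A2 n * transpose_mat (A1 n) + transpose_mat (prevA A2 n) * prevA A1 n)"
    unfolding Y_def using A2c A1c by (subst assoc_mult_mat) auto
  ultimately show ?thesis by simp
qed

end

theorem theorem5p1:
  fixes a40 a22 a04 a20 a02 :: real
    and G :: "nat \<Rightarrow> nat \<Rightarrow> real mat"
    and A1 A2 :: "nat \<Rightarrow> real mat"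
    and n :: nat
  assumes "a40 \<ge> 0" and "a22 \<ge> 0" and "a04 \<ge> 0"
    and "a40 + a22 > 0" and "a22 + a04 > 0"
    and "orthonormal_system (weight a40 a22 a04 a20 a02) G"
    and "three_term G (\<lambda>x y. x) A1"
    and "three_term G (\<lambda>x y. y) A2"
  shows
   "((4 * a40) \<cdot>\<^sub>m (A1 n * ((A1 (n+1) * transpose_mat (A1 (n+1))) * transpose_mat (A1 n)
        + transpose_mat (A1 n) * (A1 n * transpose_mat (A1 n)
                                  + transpose_mat (prevA A1 n) * prevA A1 n)))
    + (2 * a22) \<cdot>\<^sub>m (A1 n * ((A2 (n+1) * transpose_mat (A1 (n+1))) * transpose_mat (A2 n)
        + transpose_mat (A2 n) * (A1 n * transpose_mat (A2 n)
                                  + transpose_mat (prevA A1 n) * prevA A2 n)))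
    + (2 * a20) \<cdot>\<^sub>m (A1 n * transpose_mat (A1 n))
    = G n n * N1 (n+1) * minv (G n n))
    \<and>
    ((4 * a04) \<cdot>\<^sub>m (A2 n * ((A2 (n+1) * transpose_mat (A2 (n+1))) * transpose_mat (A2 n)
        + transpose_mat (A2 n) * (A2 n * transpose_mat (A2 n)
                                  + transpose_mat (prevA A2 n) * prevA A2 n)))
    + (2 * a22) \<cdot>\<^sub>m (A2 n * ((A1 (n+1) * transpose_mat (A2 (n+1))) * transpose_mat (A1 n)
        + transpose_mat (A1 n) * (A2 n * transpose_mat (A1 n)
                                  + transpose_mat (prevA A2 n) * prevA A1 n)))
    + (2 * a02) \<cdot>\<^sub>m (A2 n * transpose_mat (A2 n))
    = G n n * N2 (n+1) * minv (G n n))"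
  proof -
  interpret osysw "weight a40 a22 a04 a20 a02" G A1 A2 a40 a22 a04 a20 a02
  proof (unfold_locales)
    show "orthonormal_system (weight a40 a22 a04 a20 a02) G" by fact
    show "three_term G (\<lambda>x y. x) A1" by fact
    show "three_term G (\<lambda>x y. y) A2" by fact
    show "\<And>x y. 0 \<le> weight a40 a22 a04 a20 a02 x y" by (simp add: weight_def)
    show "(\<lambda>(x, y). weight a40 a22 a04 a20 a02 x y) \<in> borel_measurable lborel" by (rule weight_meas)
  qed simp
  show ?thesis using trans[OF LHS_x RHS_x] trans[OF LHS_y RHS_y] by blast
qed

end
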